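(* Let $\lambda$ be a (straight or skew) shape with $n$ boxes and let $m\in\mathbb N=\{1,2,3,\dots\}$. Then there is a bijection $$T[\lambda,0,+]=T[\lambda,\boxtimes]\cup T[\lambda,\div,+]\cup T[\lambda,\cdot|\cdot,+]\;\longrightarrow\;T[\lambda,m,+]$$ and a bijection $$T[\lambda,0,-]=T[\lambda,\boxtimes]\cup T[\lambda,\div,-]\cup T[\lambda,\cdot|\cdot,-]\;\longrightarrow\;T[\lambda,m,-],$$ each sending a tableau $X$ to the unique tableau $Y$ whose positive-content part, as a filling of $\lambda$, equals the nonnegative half of $X$ as a filling of $\lambda$.
   Context: Boxes of a diagram are indexed by (row $i$, column $j$), rows numbered downward and columns rightward; the content of box $(i,j)$ is $j-i$. A D-Young tableau is a filling of a skew diagram by the $2n$ numbers $\pm1,\dots,\pm n$, each number in exactly one box and each box containing one number, except that a box of content $0$ may contain a pair $\pm i$; with $c_k$ the content of the box containing $k$, one requires $c_{-k}=-c_k$. It is standard if entries increase along rows (left to right) and down columns (a box containing $\pm i$, $i>0$, counts as $-i$ when compared with entries to its left or above and as $i$ when compared with entries to its right or below). A D-Young tableau with no box of content $0$ is regarded as determined by its positive-content part (entries and contents). Let $\lambda$ be a shape with $n$ boxes. For $m\in\mathbb N$, $T[\lambda,m,\pm]$ is the set of standard D-Young tableaux whose smallest nonnegative content is $m$, whose positive-content boxes form the shape $\lambda$, with an even ($+$) / odd ($-$) number of negative entries among the positive-content boxes. $T[\lambda,\boxtimes]$ is the set of standard D-Young tableaux having exactly one box of content $0$ (necessarily containing a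 pair $\pm i$) whose boxes of nonnegative content form the shape $\lambda$; its nonnegative half is the filling of $\lambda$ by these boxes, where the zero-content box is regarded as containing $i$ or $-i$, the sign chosen so that the number of negative entries is even (for the $+$ bijection) or odd (for the $-$ bijection). $T[\lambda,\cdot|\cdot,+]$ (resp. $T[\lambda,\div,+]$) is the set of standard D-Young tableaux with exactly two boxes of content $0$ which can be divided by a vertical (resp. horizontal) straight line into two parts of $n$ boxes each, one consisting of boxes of nonnegative content and the other of boxes of nonpositive content, such that the part of nonnegative content (its nonnegative half) has shape $\lambda$ and contains an even number of negative entries; with "odd" instead of "even" one gets $T[\lambda,\cdot|\cdot,-]$, $T[\lambda,\div,-]$. The sets $T[\lambda,0,\pm]$ are defined as the displayed unions. *)

theory Defs
  imports Main
begin

text \<open>Boxes are pairs (row, column) of integers, rows numbered downward,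
columns rightward.  The content of box (i,j) is j - i.\<close>

type_synonym box = "int \<times> int"

definition content :: "box \<Rightarrow> int" where
  "content b = snd b - fst b"

definition translate :: "box \<Rightarrow> box \<Rightarrow> box" where
  "translate v b = (fst b + fst v, snd b + snd v)"

text \<open>A (straight or skew) diagram: a finite set of boxes which is convex for the
product order (rows, columns); these are exactly the skew shapes lambda/mu
up to translation.\<close>

definition skew_diagram :: "box set \<Rightarrow> bool" where
  "skew_diagram D \<longleftrightarrow> finite D \<and>
     (\<forall>a\<in>D. \<forall>c\<in>D. \<forall>b. fst a \<le> fst b \<and> fst b \<le> fst c \<and> snd a \<le> snd b \<and> snd b \<le> snd c
        \<longrightarrow> b \<in> D)"

definition Nums :: "nat \<Rightarrow> int set" where
  "Nums n = {k. k \<noteq> 0 \<and> \<bar>k\<bar> \<le> int n}"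

text \<open>A D-Young tableau of rank n is given by the position map: number k is placed
in box pos k.\<close>

definition diagram :: "nat \<Rightarrow> (int \<Rightarrow> box) \<Rightarrow> box set" where
  "diagram n pos = pos ` Nums n"

definition entries :: "nat \<Rightarrow> (int \<Rightarrow> box) \<Rightarrow> box \<Rightarrow> int set" where
  "entries n pos b = {k \<in> Nums n. pos k = b}"

definition D_tableau :: "nat \<Rightarrow> (int \<Rightarrow> box) \<Rightarrow> bool" where
  "D_tableau n pos \<longleftrightarrow>
     skew_diagram (diagram n pos) \<and>
     (\<forall>k\<in>Nums n. \<forall>l\<in>Nums n. k \<noteq> l \<and> pos k = pos l \<longrightarrow> l = - k \<and> content (pos k) = 0) \<and>
     (\<forall>k\<in>Nums n. content (pos (- k)) = - content (pos k))"

text \<open>Standardness: a box with a pair +-i counts as -i (its minimum) when compared with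
boxes to its left / above and as i (its maximum) when compared with boxes to its
right / below.\<close>

definition standard :: "nat \<Rightarrow> (int \<Rightarrow> box) \<Rightarrow> bool" where
  "standard n pos \<longleftrightarrow>
     (\<forall>b\<in>diagram n pos. \<forall>b'\<in>diagram n pos.
        ((fst b = fst b' \<and> snd b < snd b') \<or> (snd b = snd b' \<and> fst b < fst b'))
        \<longrightarrow> Max (entries n pos b) < Min (entries n pos b'))"

definition zero_boxes :: "nat \<Rightarrow> (int \<Rightarrow> box) \<Rightarrow> box set" where
  "zero_boxes n pos = {b \<in> diagram n pos. content b = 0}"

definition pos_boxes :: "nat \<Rightarrow> (int \<Rightarrow> box) \<Rightarrow> box set" where
  "pos_boxes n pos = {b \<in> diagram n pos. content b > 0}"

definition nonneg_boxes :: "nat \<Rightarrow> (int \<Rightarrow> box) \<Rightarrow> box set" where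
  "nonneg_boxes n pos = {b \<in> diagram n pos. content b \<ge> 0}"

definition has_shape :: "box set \<Rightarrow> box set \<Rightarrow> bool" where
  "has_shape lam S \<longleftrightarrow> (\<exists>v. S = translate v ` lam)"

definition neg_count :: "nat \<Rightarrow> (int \<Rightarrow> box) \<Rightarrow> box set \<Rightarrow> nat" where
  "neg_count n pos S = card {k \<in> Nums n. k < 0 \<and> pos k \<in> S}"

text \<open>Parity flag: s = True means even (+), s = False means odd (-).\<close>

definition parity_ok :: "bool \<Rightarrow> nat \<Rightarrow> bool" where
  "parity_ok s c \<longleftrightarrow> (even c = s)"

definition T_m :: "box set \<Rightarrow> nat \<Rightarrow> nat \<Rightarrow> bool \<Rightarrow> (int \<Rightarrow> box) set" where
  "T_m lam n m s = {pos. D_tableau n pos \<and> standard n pos \<and>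
     (\<exists>b\<in>diagram n pos. content b = int m) \<and>
     (\<forall>b\<in>diagram n pos. content b \<ge> 0 \<longrightarrow> content b \<ge> int m) \<and>
     has_shape lam (pos_boxes n pos) \<and>
     parity_ok s (neg_count n pos (pos_boxes n pos))}"

definition T_box :: "box set \<Rightarrow> nat \<Rightarrow> (int \<Rightarrow> box) set" where
  "T_box lam n = {pos. D_tableau n pos \<and> standard n pos \<and>
     card (zero_boxes n pos) = 1 \<and> has_shape lam (nonneg_boxes n pos)}"

definition vsplit :: "nat \<Rightarrow> box set \<Rightarrow> box set \<Rightarrow> bool" where
  "vsplit n D S \<longleftrightarrow> (\<exists>t::int.
     (S = {b \<in> D. snd b \<le> t} \<or> S = {b \<in> D. snd b > t}) \<and>
     card S = n \<and> card (D - S) = n \<and>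
     (\<forall>b\<in>S. content b \<ge> 0) \<and> (\<forall>b\<in>D - S. content b \<le> 0))"

definition hsplit :: "nat \<Rightarrow> box set \<Rightarrow> box set \<Rightarrow> bool" where
  "hsplit n D S \<longleftrightarrow> (\<exists>t::int.
     (S = {b \<in> D. fst b \<le> t} \<or> S = {b \<in> D. fst b > t}) \<and>
     card S = n \<and> card (D - S) = n \<and>
     (\<forall>b\<in>S. content b \<ge> 0) \<and> (\<forall>b\<in>D - S. content b \<le> 0))"

definition T_vert :: "box set \<Rightarrow> nat \<Rightarrow> bool \<Rightarrow> (int \<Rightarrow> box) set" where
  "T_vert lam n s = {pos. D_tableau n pos \<and> standard n pos \<and>
     card (zero_boxes n pos) = 2 \<and>
     (\<exists>S. vsplit n (diagram n pos) S \<and> has_shape lam S \<and> parity_ok s (neg_count n pos S))}"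

definition T_horiz :: "box set \<Rightarrow> nat \<Rightarrow> bool \<Rightarrow> (int \<Rightarrow> box) set" where
  "T_horiz lam n s = {pos. D_tableau n pos \<and> standard n pos \<and>
     card (zero_boxes n pos) = 2 \<and>
     (\<exists>S. hsplit n (diagram n pos) S \<and> has_shape lam S \<and> parity_ok s (neg_count n pos S))}"

definition T_zero :: "box set \<Rightarrow> nat \<Rightarrow> bool \<Rightarrow> (int \<Rightarrow> box) set" where
  "T_zero lam n s = T_box lam n \<union> T_horiz lam n s \<union> T_vert lam n s"

definition nonneg_part_ok :: "box set \<Rightarrow> nat \<Rightarrow> bool \<Rightarrow> (int \<Rightarrow> box) \<Rightarrow> box set \<Rightarrow> bool" where
  "nonneg_part_ok lam n s pos S \<longleftrightarrow>
     (card (zero_boxes n pos) = 1 \<and> S = nonneg_boxes n pos \<and> has_shape lam S) \<or>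
     (card (zero_boxes n pos) = 2 \<and> (vsplit n (diagram n pos) S \<or> hsplit n (diagram n pos) S) \<and>
        has_shape lam S \<and> parity_ok s (neg_count n pos S))"

definition box_entry :: "nat \<Rightarrow> bool \<Rightarrow> (int \<Rightarrow> box) \<Rightarrow> box \<Rightarrow> int" where
  "box_entry n s pos B =
     (if card (entries n pos B) = 1 then the_elem (entries n pos B)
      else (let i = Max (entries n pos B) in
            if parity_ok s (neg_count n pos (pos_boxes n pos)) then i else - i))"

definition fill_of :: "box set \<Rightarrow> nat \<Rightarrow> bool \<Rightarrow> (int \<Rightarrow> box) \<Rightarrow> box set \<Rightarrow> box \<Rightarrow> int" where
  "fill_of lam n s pos S =
     (let v = (SOME v. S = translate v ` lam) in
      (\<lambda>b. if b \<in> lam then box_entry n s pos (translate v b) else 0))"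

definition pos_fill :: "box set \<Rightarrow> nat \<Rightarrow> bool \<Rightarrow> (int \<Rightarrow> box) \<Rightarrow> box \<Rightarrow> int" where
  "pos_fill lam n s pos = fill_of lam n s pos (pos_boxes n pos)"

definition nonneg_fill :: "box set \<Rightarrow> nat \<Rightarrow> bool \<Rightarrow> (int \<Rightarrow> box) \<Rightarrow> box \<Rightarrow> int" where
  "nonneg_fill lam n s pos = fill_of lam n s pos (SOME S. nonneg_part_ok lam n s pos S)"

text \<open>Identification of tableaux: same entries with the same contents and the same
grouping of entries into boxes (geometry up to the paper's identification).\<close>

definition same_tableau :: "nat \<Rightarrow> (int \<Rightarrow> box) \<Rightarrow> (int \<Rightarrow> box) \<Rightarrow> bool" where
  "same_tableau n pos pos' \<longleftrightarrow>
     (\<forall>k\<in>Nums n. content (pos k) = content (pos' k) \<and>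
        (\<forall>l\<in>Nums n. pos k = pos l \<longleftrightarrow> pos' k = pos' l))"

end

theory Submission
  imports Defs
begin

definition before :: "box \<Rightarrow> box \<Rightarrow> bool" where
  "before a b \<longleftrightarrow> (fst a = fst b \<and> snd a < snd b) \<or> (snd a = snd b \<and> fst a < fst b)"

definition rot :: "int \<Rightarrow> box \<Rightarrow> box" where
  "rot t b = (t - fst b, t - snd b)"

lemma Nums_finite[simp]: "finite (Nums n)"
proof -
  have "Nums n \<subseteq> {-int n..int n}" unfolding Nums_def by auto
  thus ?thesis by (rule finite_subset) auto
qed

lemma Nums_uminus[simp]: "(- k \<in> Nums n) = (k \<in> Nums n)"
  unfolding Nums_def by auto

lemma Nums_card: "card (Nums n) = 2 * n"
proof -
  have "Nums n = {-int n..-1} \<union> {1..int n}" unfolding Nums_def by auto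
  moreover have "card ({-int n..-1} \<union> {1..int n}) = 2*n"
    by (subst card_Un_disjoint) auto
  ultimately show ?thesis by simp
qed

lemma content_translate[simp]: "content (translate v b) = content b + (snd v - fst v)"
  unfolding content_def translate_def by simp

lemma content_rot[simp]: "content (rot t b) = - content b"
  unfolding content_def rot_def by simp

lemma rot_rot[simp]: "rot t (rot t b) = b"
  unfolding rot_def by simp

lemma rot_inj[simp]: "(rot t a = rot t b) = (a = b)"
  by (metis rot_rot)

lemma translate_inj[simp]: "(translate v a = translate v b) = (a = b)"
  unfolding translate_def by (auto simp: prod_eq_iff)

lemma before_translate[simp]: "before (translate v a) (translate v b) = before a b"
  unfolding before_def translate_def by auto

lemma before_rot[simp]: "before (rot t a) (rot t b) = before b a"
  unfolding before_def rot_def by auto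

lemma translate_translate: "translate v (translate w b) = translate (fst v + fst w, snd v + snd w) b"
  unfolding translate_def by simp

lemma translate_neg[simp]: "translate (- fst v, - snd v) (translate v b) = b"
  unfolding translate_def by simp

lemma translate_neg2[simp]: "translate v (translate (- fst v, - snd v) b) = b"
  unfolding translate_def by simp

lemma skew_translate: "skew_diagram A \<Longrightarrow> skew_diagram (translate v ` A)"
  unfolding skew_diagram_def
proof (intro conjI ballI allI impI)
  assume h: "finite A \<and> (\<forall>a\<in>A. \<forall>c\<in>A. \<forall>b. fst a \<le> fst b \<and> fst b \<le> fst c \<and> snd a \<le> snd b \<and> snd b \<le> snd c \<longrightarrow> b \<in> A)"
  show "finite (translate v ` A)" using h by simp
  fix a c b assume a: "a \<in> translate v ` A" and c: "c \<in> translate v ` A"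
    and b: "fst a \<le> fst b \<and> fst b \<le> fst c \<and> snd a \<le> snd b \<and> snd b \<le> snd c"
  obtain a' c' where a': "a' \<in> A" "a = translate v a'" and c': "c' \<in> A" "c = translate v c'" using a c by auto
  let ?b = "translate (- fst v, - snd v) b"
  have "?b \<in> A" using h a' c' b by (auto simp: translate_def)
  thus "b \<in> translate v ` A" by (metis image_eqI translate_neg2)
qed

lemma translate_set_inj:
  assumes "finite A" "A \<noteq> {}" "translate v ` A = translate w ` A"
  shows "v = w"
proof -
  have f1: "Min (fst ` translate u ` A) = Min (fst ` A) + fst u" for u
  proof -
    have "fst ` translate u ` A = (\<lambda>x. x + fst u) ` (fst ` A)" by (auto simp: translate_def image_image)
    moreover have "Min ((\<lambda>x. x + fst u) ` (fst ` A)) = Min (fst ` A) + fst u"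
      using assms by (subst mono_Min_commute[symmetric]) (auto simp: mono_def)
    ultimately show ?thesis by simp
  qed
  have f2: "Min (snd ` translate u ` A) = Min (snd ` A) + snd u" for u
  proof -
    have "snd ` translate u ` A = (\<lambda>x. x + snd u) ` (snd ` A)" by (auto simp: translate_def image_image)
    moreover have "Min ((\<lambda>x. x + snd u) ` (snd ` A)) = Min (snd ` A) + snd u"
      using assms by (subst mono_Min_commute[symmetric]) (auto simp: mono_def)
    ultimately show ?thesis by simp
  qed
  show ?thesis using f1[of v] f1[of w] f2[of v] f2[of w] assms(3) by (simp add: prod_eq_iff)
qed

lemma fill_of_eq:
  assumes "finite lam" "lam \<noteq> {}" "S = translate v ` lam"
  shows "fill_of lam n s pos S = (\<lambda>b. if b \<in> lam then box_entry n s pos (translate v b) else 0)"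
proof -
  have h: "(SOME v. S = translate v ` lam) = v"
    by (rule some_equality) (use assms translate_set_inj in auto)
  show ?thesis unfolding fill_of_def Let_def h by (rule refl)
qed

lemma standard_iff:
  "standard n pos \<longleftrightarrow> (\<forall>k\<in>Nums n. \<forall>l\<in>Nums n. before (pos k) (pos l) \<longrightarrow> k < l)"
proof
  assume st: "standard n pos"
  show "\<forall>k\<in>Nums n. \<forall>l\<in>Nums n. before (pos k) (pos l) \<longrightarrow> k < l"
  proof (intro ballI impI)
    fix k l assume k: "k \<in> Nums n" and l: "l \<in> Nums n" and b: "before (pos k) (pos l)"
    have fin: "finite (entries n pos b)" for b unfolding entries_def by simp
    have "Max (entries n pos (pos k)) < Min (entries n pos (pos l))"
      using st k l b unfolding standard_def before_def diagram_def by blast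
    moreover have "k \<le> Max (entries n pos (pos k))" using k fin by (intro Max_ge) (auto simp: entries_def)
    moreover have "Min (entries n pos (pos l)) \<le> l" using l fin by (intro Min_le) (auto simp: entries_def)
    ultimately show "k < l" by simp
  qed
next
  assume h: "\<forall>k\<in>Nums n. \<forall>l\<in>Nums n. before (pos k) (pos l) \<longrightarrow> k < l"
  show "standard n pos" unfolding standard_def
  proof (intro ballI impI)
    fix b b' assume b: "b \<in> diagram n pos" and b': "b' \<in> diagram n pos"
      and o: "fst b = fst b' \<and> snd b < snd b' \<or> snd b = snd b' \<and> fst b < fst b'"
    have fin: "finite (entries n pos b)" for b unfolding entries_def by simp
    have ne: "entries n pos b \<noteq> {}" "entries n pos b' \<noteq> {}" using b b' unfolding diagram_def entries_def by auto
    have "Max (entries n pos b) \<in> entries n pos b" using ne fin by (intro Max_in) auto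
    moreover have "Min (entries n pos b') \<in> entries n pos b'" using ne fin by (intro Min_in) auto
    ultimately show "Max (entries n pos b) < Min (entries n pos b')"
      using h o unfolding entries_def before_def by auto
  qed
qed


lemma dt_pair:
  assumes "D_tableau n pos" "k \<in> Nums n" "l \<in> Nums n" "pos k = pos l" "k \<noteq> l"
  shows "l = - k \<and> content (pos k) = 0"
  using assms unfolding D_tableau_def by blast

lemma dt_content_neg:
  assumes "D_tableau n pos" "k \<in> Nums n"
  shows "content (pos (- k)) = - content (pos k)"
  using assms unfolding D_tableau_def by blast

lemma entries_fin[simp]: "finite (entries n pos b)"
  unfolding entries_def by simp

lemma box_entry_in:
  assumes "D_tableau n pos" "b \<in> diagram n pos"
  shows "box_entry n s pos b \<in> entries n pos b"
proof -
  have ne: "entries n pos b \<noteq> {}" using assms(2) unfolding diagram_def entries_def by auto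
  show ?thesis
  proof (cases "card (entries n pos b) = 1")
    case True
    then obtain x where "entries n pos b = {x}" using card_1_singletonE by blast
    thus ?thesis using True unfolding box_entry_def by simp
  next
    case False
    let ?E = "entries n pos b"
    have M: "Max ?E \<in> ?E" using ne by (intro Max_in) auto
    obtain y where y: "y \<in> ?E" "y \<noteq> Max ?E"
    proof -
      have "?E \<noteq> {Max ?E}" using False by (metis One_nat_def card_1_singleton_iff)
      thus ?thesis using M that by blast
    qed
    have "y = - Max ?E" using dt_pair[OF assms(1), of "Max ?E" y] M y unfolding entries_def by auto
    hence "- Max ?E \<in> ?E" using y by simp
    thus ?thesis using False M unfolding box_entry_def Let_def by auto
  qed
qed

lemma entries_single:
  assumes "D_tableau n pos" "k \<in> Nums n" "content (pos k) \<noteq> 0 \<or> inj_on pos (Nums n)"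
  shows "entries n pos (pos k) = {k}"
proof -
  have "x = k" if x: "x \<in> Nums n" "pos x = pos k" for x
  proof (rule ccontr)
    assume "x \<noteq> k"
    hence "x = - k \<and> content (pos k) = 0" using dt_pair[OF assms(1), of k x] x assms(2) by auto
    moreover have "\<not> inj_on pos (Nums n)" using \<open>x \<noteq> k\<close> x assms(2) unfolding inj_on_def by blast
    ultimately show False using assms(3) by blast
  qed
  thus ?thesis using assms(2) unfolding entries_def by auto
qed

lemma box_entry_single:
  assumes "entries n pos b = {k}"
  shows "box_entry n s pos b = k"
  using assms unfolding box_entry_def by simp

definition goodG :: "box set \<Rightarrow> nat \<Rightarrow> (box \<Rightarrow> int) \<Rightarrow> bool" where
  "goodG S n G \<longleftrightarrow> (\<forall>b\<in>S. G b \<in> Nums n) \<and> inj_on (\<lambda>b. \<bar>G b\<bar>) S \<and>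
     (\<forall>b\<in>S. \<forall>b'\<in>S. before b b' \<longrightarrow> G b < G b')"

lemma goodG_surj:
  assumes "goodG S n G" "finite S" "card S = n" "k \<in> Nums n"
  shows "\<exists>b\<in>S. \<bar>G b\<bar> = \<bar>k\<bar>"
proof -
  let ?I = "(\<lambda>b. \<bar>G b\<bar>) ` S"
  have sub: "?I \<subseteq> {1..int n}"
  proof
    fix x assume "x \<in> ?I"
    then obtain b where "b \<in> S" "x = \<bar>G b\<bar>" by blast
    moreover have "G b \<in> Nums n" using assms(1) \<open>b \<in> S\<close> unfolding goodG_def by blast
    ultimately show "x \<in> {1..int n}" unfolding Nums_def by auto
  qed
  have c: "card ?I = n" using assms(1,3) unfolding goodG_def by (simp add: card_image)
  have "card {1..int n} = n" by simp
  hence eq: "?I = {1..int n}" using sub c by (intro card_subset_eq) simp_all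
  have "\<bar>k\<bar> \<in> {1..int n}" using assms(4) unfolding Nums_def by auto
  hence "\<bar>k\<bar> \<in> ?I" using eq by simp
  thus ?thesis by auto
qed

lemma analysis:
  assumes dt: "D_tableau n pos" and st: "standard n pos" and sub: "S \<subseteq> diagram n pos"
    and nn: "\<forall>b\<in>S. content b \<ge> 0"
    and z: "\<forall>b\<in>S. \<forall>b'\<in>S. content b = 0 \<longrightarrow> content b' = 0 \<longrightarrow> b = b'"
    and G: "\<forall>b\<in>S. G b \<in> entries n pos b"
  shows "goodG S n G \<and> (\<forall>b\<in>S. pos (G b) = b)"
proof -
  have pG: "\<forall>b\<in>S. pos (G b) = b \<and> G b \<in> Nums n" using G unfolding entries_def by auto
  have inj: "inj_on (\<lambda>b. \<bar>G b\<bar>) S"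
  proof (rule inj_onI)
    fix b b' assume b: "b \<in> S" and b': "b' \<in> S" and e: "\<bar>G b\<bar> = \<bar>G b'\<bar>"
    show "b = b'"
    proof (cases "G b = G b'")
      case True thus ?thesis using pG b b' by metis
    next
      case False
      hence "G b' = - G b" using e by arith
      have "content (pos (G b')) = - content (pos (G b))" unfolding \<open>G b' = - G b\<close>
        using dt_content_neg[OF dt, of "G b"] pG b by blast
      hence "content b' = - content b" using pG b b' by simp
      moreover have "content b \<ge> 0" "content b' \<ge> 0" using nn b b' by auto
      ultimately have "content b = 0" "content b' = 0" by auto
      thus ?thesis using z b b' by blast
    qed
  qed
  have "\<forall>b\<in>S. \<forall>b'\<in>S. before b b' \<longrightarrow> G b < G b'"
  proof (intro ballI impI)
    fix b b' assume b: "b \<in> S" and b': "b' \<in> S" and bf: "before b b'"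
    have "before (pos (G b)) (pos (G b'))" using pG b b' bf by simp
    thus "G b < G b'" using st pG b b' unfolding standard_iff by blast
  qed
  thus ?thesis using pG inj unfolding goodG_def by blast
qed

definition phi :: "box set \<Rightarrow> (box \<Rightarrow> int) \<Rightarrow> int \<Rightarrow> box" where
  "phi P G k = (THE b. b \<in> P \<and> \<bar>G b\<bar> = \<bar>k\<bar>)"

definition build :: "box set \<Rightarrow> (box \<Rightarrow> int) \<Rightarrow> int \<Rightarrow> int \<Rightarrow> box" where
  "build P G t k = (if G (phi P G k) = k then phi P G k else rot t (phi P G k))"

locale cons =
  fixes P :: "box set" and G :: "box \<Rightarrow> int" and n :: nat and t :: int
  assumes good: "goodG P n G" and finP: "finite P" and cardP: "card P = n"
begin

lemma G_Nums: "b \<in> P \<Longrightarrow> G b \<in> Nums n" using good unfolding goodG_def by auto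
lemma G_nz: "b \<in> P \<Longrightarrow> G b \<noteq> 0" using G_Nums unfolding Nums_def by auto

lemma phi_G: assumes "b \<in> P" "\<bar>k\<bar> = \<bar>G b\<bar>" shows "phi P G k = b"
  unfolding phi_def
proof (rule the_equality)
  show "b \<in> P \<and> \<bar>G b\<bar> = \<bar>k\<bar>" using assms by simp
  fix b' assume "b' \<in> P \<and> \<bar>G b'\<bar> = \<bar>k\<bar>"
  thus "b' = b" using assms good unfolding goodG_def inj_on_def by auto
qed

lemma phi_in: assumes "k \<in> Nums n" shows "phi P G k \<in> P" "\<bar>G (phi P G k)\<bar> = \<bar>k\<bar>"
proof -
  obtain b where "b \<in> P" "\<bar>G b\<bar> = \<bar>k\<bar>" using goodG_surj[OF good finP cardP assms] by blast
  thus "phi P G k \<in> P" "\<bar>G (phi P G k)\<bar> = \<bar>k\<bar>" using phi_G by auto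
qed

lemma build_G: "b \<in> P \<Longrightarrow> build P G t (G b) = b"
  unfolding build_def using phi_G[of b "G b"] by simp

lemma build_negG: "b \<in> P \<Longrightarrow> build P G t (- G b) = rot t b"
  unfolding build_def using phi_G[of b "- G b"] G_nz[of b] by simp

lemma k_ex: assumes "k \<in> Nums n"
  shows "\<exists>b\<in>P. k = G b \<or> k = - G b"
proof -
  have "k = G (phi P G k) \<or> k = - G (phi P G k)" using phi_in(2)[OF assms] by arith
  thus ?thesis using phi_in(1)[OF assms] by blast
qed

lemma diagram_build: "diagram n (build P G t) = P \<union> rot t ` P"
proof
  show "diagram n (build P G t) \<subseteq> P \<union> rot t ` P"
    unfolding diagram_def
  proof
    fix x assume "x \<in> build P G t ` Nums n"
    then obtain k where k: "k \<in> Nums n" "x = build P G t k" by blast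
    then obtain b where "b \<in> P" "k = G b \<or> k = - G b" using k_ex by blast
    thus "x \<in> P \<union> rot t ` P" using k build_G[of b] build_negG[of b] by auto
  qed
  show "P \<union> rot t ` P \<subseteq> diagram n (build P G t)"
    unfolding diagram_def
  proof (auto)
    fix b assume "b \<in> P"
    thus "b \<in> build P G t ` Nums n" using build_G[of b] G_Nums[of b] by (metis image_eqI)
  next
    fix b assume "b \<in> P"
    thus "rot t b \<in> build P G t ` Nums n" using build_negG[of b] G_Nums[of b]
      by (metis image_eqI Nums_uminus)
  qed
qed

theorem build_ok:
  assumes skew: "skew_diagram P"
    and conv: "\<forall>a\<in>P. \<forall>c\<in>P. \<forall>b. (fst a \<le> fst b \<and> fst b \<le> fst (rot t c) \<and> snd a \<le> snd b \<and> snd b \<le> snd (rot t c))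
                 \<or> (fst (rot t c) \<le> fst b \<and> fst b \<le> fst a \<and> snd (rot t c) \<le> snd b \<and> snd b \<le> snd a)
                 \<longrightarrow> b \<in> P \<union> rot t ` P"
    and int: "\<forall>a\<in>P. \<forall>c\<in>P. a = rot t c \<longrightarrow> rot t a = a"
    and cst: "\<forall>a\<in>P. \<forall>c\<in>P. (before a (rot t c) \<longrightarrow> G a < - G c) \<and> (before (rot t c) a \<longrightarrow> - G c < G a)"
  shows "D_tableau n (build P G t) \<and> standard n (build P G t)"
proof -
  let ?p = "build P G t"
  have sk: "skew_diagram (P \<union> rot t ` P)"
    unfolding skew_diagram_def
  proof (intro conjI ballI allI impI)
    show "finite (P \<union> rot t ` P)" using finP by simp
    fix a c b assume a: "a \<in> P \<union> rot t ` P" and c: "c \<in> P \<union> rot t ` P"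
      and b: "fst a \<le> fst b \<and> fst b \<le> fst c \<and> snd a \<le> snd b \<and> snd b \<le> snd c"
    show "b \<in> P \<union> rot t ` P"
    proof (cases "a \<in> P")
      case aP: True
      show ?thesis
      proof (cases "c \<in> P")
        case True thus ?thesis using skew aP b unfolding skew_diagram_def by blast
      next
        case False
        then obtain c' where "c' \<in> P" "c = rot t c'" using c by auto
        thus ?thesis using conv aP b by blast
      qed
    next
      case aQ: False
      then obtain a' where a': "a' \<in> P" "a = rot t a'" using a by auto
      show ?thesis
      proof (cases "c \<in> P")
        case True thus ?thesis using conv a' b by blast
      next
        case False
        then obtain c' where c': "c' \<in> P" "c = rot t c'" using c by auto
        have sk2: "\<forall>b. fst c' \<le> fst b \<and> fst b \<le> fst a' \<and> snd c' \<le> snd b \<and> snd b \<le> snd a' \<longrightarrow> b \<in> P"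
          using skew a' c' unfolding skew_diagram_def by blast
        have "rot t b \<in> P" using b a' c' by (intro sk2[rule_format]) (auto simp: rot_def)
        thus ?thesis by (metis UnI2 image_eqI rot_rot)
      qed
    qed
  qed
  have pair: "l = - k \<and> content (?p k) = 0"
    if k: "k \<in> Nums n" and l: "l \<in> Nums n" and e: "?p k = ?p l" and ne: "k \<noteq> l" for k l
  proof -
    have A: "l = - k \<and> content (?p k) = 0" if b1: "b1 \<in> P" and b2: "b2 \<in> P" and kk: "k = G b1" and ll: "l = - G b2"
      and e: "?p k = ?p l" for k l b1 b2
    proof -
      have "b1 = rot t b2" using e kk ll b1 b2 build_G[of b1] build_negG[of b2] by simp
      hence "rot t b1 = b1" using int b1 b2 by blast
      hence "b2 = b1" using \<open>b1 = rot t b2\<close> by (metis rot_rot)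
      moreover have "content b1 = 0" using \<open>rot t b1 = b1\<close> content_rot[of t b1] by simp
      ultimately show ?thesis using kk ll b1 build_G[of b1] by simp
    qed
    obtain b1 where b1: "b1 \<in> P" "k = G b1 \<or> k = - G b1" using k_ex k by blast
    obtain b2 where b2: "b2 \<in> P" "l = G b2 \<or> l = - G b2" using k_ex l by blast
    show ?thesis
    proof (cases "k = G b1")
      case k1: True
      show ?thesis
      proof (cases "l = G b2")
        case True thus ?thesis using b1 b2 k1 e ne build_G[of b1] build_G[of b2] by auto
      next
        case False thus ?thesis using A[OF b1(1) b2(1) k1] b2 e by blast
      qed
    next
      case k2: False
      hence k2: "k = - G b1" using b1 by simp
      show ?thesis
      proof (cases "l = G b2")
        case True
        have "k = - l \<and> content (?p l) = 0" using A[OF b2(1) b1(1) True k2] e by simp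
        thus ?thesis using e by simp
      next
        case False
        hence "l = - G b2" using b2 by simp
        thus ?thesis using b1 b2 k2 e ne build_negG[of b1] build_negG[of b2] by auto
      qed
    qed
  qed
  have cneg: "content (?p (- k)) = - content (?p k)" if k: "k \<in> Nums n" for k
  proof -
    obtain b where b: "b \<in> P" "k = G b \<or> k = - G b" using k_ex k by blast
    thus ?thesis using build_G[of b] build_negG[of b] by auto
  qed
  have dt: "D_tableau n ?p" unfolding D_tableau_def diagram_build using sk pair cneg by blast
  have std: "standard n ?p" unfolding standard_iff
  proof (intro ballI impI)
    fix k l assume k: "k \<in> Nums n" and l: "l \<in> Nums n" and bf: "before (?p k) (?p l)"
    have stdP: "\<forall>b\<in>P. \<forall>b'\<in>P. before b b' \<longrightarrow> G b < G b'" using good unfolding goodG_def by blast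
    obtain b1 where b1: "b1 \<in> P" "k = G b1 \<or> k = - G b1" using k_ex k by blast
    obtain b2 where b2: "b2 \<in> P" "l = G b2 \<or> l = - G b2" using k_ex l by blast
    show "k < l"
    proof (cases "k = G b1")
      case k1: True
      show ?thesis
      proof (cases "l = G b2")
        case True thus ?thesis using b1 b2 k1 bf build_G[of b1] build_G[of b2] stdP by auto
      next
        case False
        hence "l = - G b2" using b2 by simp
        thus ?thesis using b1 b2 k1 bf build_G[of b1] build_negG[of b2] cst by auto
      qed
    next
      case False
      hence k2: "k = - G b1" using b1 by simp
      show ?thesis
      proof (cases "l = G b2")
        case True thus ?thesis using b1 b2 k2 bf build_G[of b2] build_negG[of b1] cst by auto
      next
        case False
        hence l2: "l = - G b2" using b2 by simp
        hence "before b2 b1" using b1 b2 k2 bf build_negG[of b1] build_negG[of b2] by simp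
        thus ?thesis using b1 b2 k2 l2 stdP by fastforce
      qed
    qed
  qed
  show ?thesis using dt std by simp
qed

end


locale norm =
  fixes P :: "box set" and G :: "box \<Rightarrow> int" and n :: nat
  assumes good: "goodG P n G" and finP: "finite P" and cardP: "card P = n"
    and skew: "skew_diagram P" and origin: "(0,0) \<in> P"
    and quad: "\<forall>b\<in>P. fst b \<le> 0 \<and> 0 \<le> snd b"
begin

lemma cons_t: "cons P G n" using good finP cardP by unfold_locales

lemma stdP: "a \<in> P \<Longrightarrow> b \<in> P \<Longrightarrow> before a b \<Longrightarrow> G a < G b"
  using good unfolding goodG_def by blast

lemma skewP: "a \<in> P \<Longrightarrow> c \<in> P \<Longrightarrow> fst a \<le> fst b \<Longrightarrow> fst b \<le> fst c \<Longrightarrow> snd a \<le> snd b \<Longrightarrow> snd b \<le> snd c \<Longrightarrow> b \<in> P"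
  using skew unfolding skew_diagram_def by blast

lemma quadP: "b \<in> P \<Longrightarrow> fst b \<le> 0" "b \<in> P \<Longrightarrow> 0 \<le> snd b"
  using quad by auto

lemma col0: assumes "(r,0) \<in> P" shows "G (r,0) \<le> G (0,0)"
proof (cases "r = 0")
  case False
  hence "r < 0" using quadP(1)[OF assms] by simp
  thus ?thesis using stdP[OF assms origin] by (simp add: before_def)
qed simp

lemma col0': assumes "(r,0) \<in> P" "r < 0" shows "(-1,0) \<in> P" "G (r,0) \<le> G (-1,0)"
proof -
  show m: "(-1,0) \<in> P" using skewP[OF assms(1) origin, of "(-1,0)"] assms(2) by simp
  show "G (r,0) \<le> G (-1,0)"
  proof (cases "r = -1")
    case False thus ?thesis using stdP[OF assms(1) m] assms(2) by (simp add: before_def)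
  qed simp
qed

lemma row0: assumes "(0,s) \<in> P" shows "G (0,0) \<le> G (0,s)"
proof (cases "s = 0")
  case False
  hence "s > 0" using quadP(2)[OF assms] by simp
  thus ?thesis using stdP[OF origin assms] by (simp add: before_def)
qed simp

lemma row0': assumes "(0,s) \<in> P" "s > 0" shows "(0,1) \<in> P" "G (0,1) \<le> G (0,s)"
proof -
  show m: "(0,1) \<in> P" using skewP[OF origin assms(1), of "(0,1)"] assms(2) by simp
  show "G (0,1) \<le> G (0,s)"
  proof (cases "s = 1")
    case False thus ?thesis using stdP[OF m assms(1)] assms(2) by (simp add: before_def)
  qed simp
qed

lemma col1: assumes "(r,1) \<in> P" "(0,1) \<in> P" shows "G (r,1) \<le> G (0,1)"
proof (cases "r = 0")
  case False
  hence "r < 0" using quadP(1)[OF assms(1)] by simp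
  thus ?thesis using stdP[OF assms] by (simp add: before_def)
qed simp

lemma rowm1: assumes "(-1,s) \<in> P" "(-1,0) \<in> P" shows "G (-1,0) \<le> G (-1,s)"
proof (cases "s = 0")
  case False
  hence "s > 0" using quadP(2)[OF assms(1)] by simp
  thus ?thesis using stdP[OF assms(2,1)] by (simp add: before_def)
qed simp

end

lemma box_ok:
  assumes nm: "norm P G n"
    and C1: "(0,1) \<in> P \<longrightarrow> G (0,1) > \<bar>G (0,0)\<bar>"
    and C2: "(-1,0) \<in> P \<longrightarrow> G (-1,0) < - \<bar>G (0,0)\<bar>"
  shows "D_tableau n (build P G 0) \<and> standard n (build P G 0)"
proof -
  interpret norm P G n by (rule nm)
  show ?thesis
  proof (rule cons.build_ok[OF cons_t skew])
    show "\<forall>a\<in>P. \<forall>c\<in>P. \<forall>b. (fst a \<le> fst b \<and> fst b \<le> fst (rot 0 c) \<and> snd a \<le> snd b \<and> snd b \<le> snd (rot 0 c))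
                 \<or> (fst (rot 0 c) \<le> fst b \<and> fst b \<le> fst a \<and> snd (rot 0 c) \<le> snd b \<and> snd b \<le> snd a)
                 \<longrightarrow> b \<in> P \<union> rot 0 ` P"
    proof (intro ballI allI impI)
      fix a c b assume a: "a \<in> P" and c: "c \<in> P"
        and h: "(fst a \<le> fst b \<and> fst b \<le> fst (rot 0 c) \<and> snd a \<le> snd b \<and> snd b \<le> snd (rot 0 c))
                 \<or> (fst (rot 0 c) \<le> fst b \<and> fst b \<le> fst a \<and> snd (rot 0 c) \<le> snd b \<and> snd b \<le> snd a)"
      have qa: "fst a \<le> 0" "0 \<le> snd a" and qc: "fst c \<le> 0" "0 \<le> snd c" using quadP a c by auto
      have rb: "rot 0 (rot 0 b) = b" by simp
      show "b \<in> P \<union> rot 0 ` P"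
      proof (cases "fst b \<le> 0 \<and> snd b \<ge> 0")
        case True
        hence "b \<in> P" using h qa qc skewP[OF a origin, of b] skewP[OF origin a, of b] by (auto simp: rot_def)
        thus ?thesis by simp
      next
        case False
        hence "rot 0 b \<in> P" using h qa qc skewP[OF c origin, of "rot 0 b"] skewP[OF origin c, of "rot 0 b"]
          by (auto simp: rot_def)
        thus ?thesis using rb by (metis UnI2 image_eqI)
      qed
    qed
    show "\<forall>a\<in>P. \<forall>c\<in>P. a = rot 0 c \<longrightarrow> rot 0 a = a"
    proof (intro ballI impI)
      fix a c assume h: "a \<in> P" "c \<in> P" "a = rot 0 c"
      have "fst a \<le> 0" "0 \<le> snd a" "fst c \<le> 0" "0 \<le> snd c" using quadP h by auto
      moreover have "fst a = - fst c" "snd a = - snd c" using h(3) by (auto simp: rot_def)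
      ultimately have "fst a = 0" "snd a = 0" by auto
      thus "rot 0 a = a" by (auto simp: rot_def prod_eq_iff)
    qed
    show "\<forall>a\<in>P. \<forall>c\<in>P. (before a (rot 0 c) \<longrightarrow> G a < - G c) \<and> (before (rot 0 c) a \<longrightarrow> - G c < G a)"
    proof (intro ballI conjI impI)
      fix a c assume a: "a \<in> P" and c: "c \<in> P"
      obtain ra sa where ea: "a = (ra, sa)" by fastforce
      obtain rc sc where ec: "c = (rc, sc)" by fastforce
      have q: "ra \<le> 0" "0 \<le> sa" "rc \<le> 0" "0 \<le> sc" using quadP a c ea ec by auto
      {
        assume "before a (rot 0 c)"
        hence bb: "sa = 0" "sc = 0" "ra < - rc" using q ea ec by (auto simp: before_def rot_def)
        have A: "(ra,0) \<in> P" "(rc,0) \<in> P" using a c ea ec bb by auto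
        show "G a < - G c"
        proof (cases "ra < 0")
          case True
          note X = col0'[OF A(1) True]
          have "G (ra,0) < - \<bar>G (0,0)\<bar>" using X C2 by auto
          moreover have "- G (rc,0) \<ge> - \<bar>G (0,0)\<bar> \<or> - G (rc, 0) > \<bar>G (0,0)\<bar>"
          proof (cases "rc < 0")
            case True thus ?thesis using col0'[OF A(2) True] C2 by auto
          next
            case False hence "rc = 0" using q by simp
            thus ?thesis by simp arith
          qed
          ultimately show ?thesis using ea ec bb by auto
        next
          case False
          hence "ra = 0" "rc < 0" using q bb by auto
          thus ?thesis using col0'[OF A(2) \<open>rc < 0\<close>] C2 ea ec bb by auto
        qed
      }
      {
        assume "before (rot 0 c) a"
        hence bb: "ra = 0" "rc = 0" "- sc < sa" using q ea ec by (auto simp: before_def rot_def)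
        have A: "(0,sa) \<in> P" "(0,sc) \<in> P" using a c ea ec bb by auto
        show "- G c < G a"
        proof (cases "sa > 0")
          case True
          note X = row0'[OF A(1) True]
          have "G (0,sa) > \<bar>G (0,0)\<bar>" using X C1 by auto
          moreover have "G (0,sc) \<ge> - \<bar>G (0,0)\<bar>"
          proof (cases "sc > 0")
            case True thus ?thesis using row0'[OF A(2) True] C1 by auto
          next
            case False hence "sc = 0" using q by simp
            thus ?thesis by simp
          qed
          ultimately show ?thesis using ea ec bb by auto
        next
          case False
          hence "sa = 0" "sc > 0" using q bb by auto
          thus ?thesis using row0'[OF A(2) \<open>sc > 0\<close>] C1 ea ec bb by auto
        qed
      }
    qed
  qed
qed


lemma horiz_ok:
  assumes nm: "norm P G n"
    and R: "(0,1) \<in> P" and e: "G (0,1) < - G (0,0)"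
  shows "D_tableau n (build P G 1) \<and> standard n (build P G 1)"
proof -
  interpret norm P G n by (rule nm)
  show ?thesis
  proof (rule cons.build_ok[OF cons_t skew])
    show "\<forall>a\<in>P. \<forall>c\<in>P. \<forall>b. (fst a \<le> fst b \<and> fst b \<le> fst (rot 1 c) \<and> snd a \<le> snd b \<and> snd b \<le> snd (rot 1 c))
                 \<or> (fst (rot 1 c) \<le> fst b \<and> fst b \<le> fst a \<and> snd (rot 1 c) \<le> snd b \<and> snd b \<le> snd a)
                 \<longrightarrow> b \<in> P \<union> rot 1 ` P"
    proof (intro ballI allI impI)
      fix a c b assume a: "a \<in> P" and c: "c \<in> P"
        and h: "(fst a \<le> fst b \<and> fst b \<le> fst (rot 1 c) \<and> snd a \<le> snd b \<and> snd b \<le> snd (rot 1 c))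
                 \<or> (fst (rot 1 c) \<le> fst b \<and> fst b \<le> fst a \<and> snd (rot 1 c) \<le> snd b \<and> snd b \<le> snd a)"
      have qa: "fst a \<le> 0" "0 \<le> snd a" and qc: "fst c \<le> 0" "0 \<le> snd c" using quadP a c by auto
      have h1: "fst a \<le> fst b \<and> fst b \<le> 1 - fst c \<and> snd a \<le> snd b \<and> snd b \<le> 1 - snd c"
        using h qa qc by (auto simp: rot_def)
      have rb: "rot 1 (rot 1 b) = b" by simp
      show "b \<in> P \<union> rot 1 ` P"
      proof (cases "fst b \<le> 0")
        case True
        hence "b \<in> P" using h1 qa qc skewP[OF a R, of b] by auto
        thus ?thesis by simp
      next
        case False
        hence "rot 1 b \<in> P" using h1 qa qc skewP[OF c R, of "rot 1 b"] by (auto simp: rot_def)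
        thus ?thesis using rb by (metis UnI2 image_eqI)
      qed
    qed
    show "\<forall>a\<in>P. \<forall>c\<in>P. a = rot 1 c \<longrightarrow> rot 1 a = a"
    proof (intro ballI impI)
      fix a c assume h: "a \<in> P" "c \<in> P" "a = rot 1 c"
      have "fst a \<le> 0" "fst c \<le> 0" using quadP h by auto
      moreover have "fst a = 1 - fst c" using h(3) by (auto simp: rot_def)
      ultimately show "rot 1 a = a" by auto
    qed
    show "\<forall>a\<in>P. \<forall>c\<in>P. (before a (rot 1 c) \<longrightarrow> G a < - G c) \<and> (before (rot 1 c) a \<longrightarrow> - G c < G a)"
    proof (intro ballI conjI impI)
      fix a c assume a: "a \<in> P" and c: "c \<in> P"
      obtain ra sa where ea: "a = (ra, sa)" by fastforce
      obtain rc sc where ec: "c = (rc, sc)" by fastforce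
      have q: "ra \<le> 0" "0 \<le> sa" "rc \<le> 0" "0 \<le> sc" using quadP a c ea ec by auto
      {
        assume "before a (rot 1 c)"
        hence bb: "sa = 1 - sc" using q ea ec by (auto simp: before_def rot_def)
        hence "(sa = 0 \<and> sc = 1) \<or> (sa = 1 \<and> sc = 0)" using q by auto
        thus "G a < - G c"
        proof
          assume s: "sa = 0 \<and> sc = 1"
          have "G a \<le> G (0,0)" using col0[of ra] a ea s by simp
          moreover have "G c \<le> G (0,1)" using col1[of rc] c ec s R by simp
          ultimately show ?thesis using e by simp
        next
          assume s: "sa = 1 \<and> sc = 0"
          have "G c \<le> G (0,0)" using col0[of rc] c ec s by simp
          moreover have "G a \<le> G (0,1)" using col1[of ra] a ea s R by simp
          ultimately show ?thesis using e by simp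
        qed
      }
      {
        assume "before (rot 1 c) a"
        hence False using q ea ec by (auto simp: before_def rot_def)
        thus "- G c < G a" by simp
      }
    qed
  qed
qed

lemma vert_ok:
  assumes nm: "norm P G n"
    and A: "(-1,0) \<in> P" and e: "- G (0,0) < G (-1,0)"
  shows "D_tableau n (build P G (-1)) \<and> standard n (build P G (-1))"
proof -
  interpret norm P G n by (rule nm)
  show ?thesis
  proof (rule cons.build_ok[OF cons_t skew])
    show "\<forall>a\<in>P. \<forall>c\<in>P. \<forall>b. (fst a \<le> fst b \<and> fst b \<le> fst (rot (-1) c) \<and> snd a \<le> snd b \<and> snd b \<le> snd (rot (-1) c))
                 \<or> (fst (rot (-1) c) \<le> fst b \<and> fst b \<le> fst a \<and> snd (rot (-1) c) \<le> snd b \<and> snd b \<le> snd a)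
                 \<longrightarrow> b \<in> P \<union> rot (-1) ` P"
    proof (intro ballI allI impI)
      fix a c b assume a: "a \<in> P" and c: "c \<in> P"
        and h: "(fst a \<le> fst b \<and> fst b \<le> fst (rot (-1) c) \<and> snd a \<le> snd b \<and> snd b \<le> snd (rot (-1) c))
                 \<or> (fst (rot (-1) c) \<le> fst b \<and> fst b \<le> fst a \<and> snd (rot (-1) c) \<le> snd b \<and> snd b \<le> snd a)"
      have qa: "fst a \<le> 0" "0 \<le> snd a" and qc: "fst c \<le> 0" "0 \<le> snd c" using quadP a c by auto
      have h1: "-1 - fst c \<le> fst b \<and> fst b \<le> fst a \<and> -1 - snd c \<le> snd b \<and> snd b \<le> snd a"
        using h qa qc by (auto simp: rot_def)
      have rb: "rot (-1) (rot (-1) b) = b" by simp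
      show "b \<in> P \<union> rot (-1) ` P"
      proof (cases "snd b \<ge> 0")
        case True
        hence "b \<in> P" using h1 qa qc skewP[OF A a, of b] by auto
        thus ?thesis by simp
      next
        case False
        hence "rot (-1) b \<in> P" using h1 qa qc skewP[OF A c, of "rot (-1) b"] by (auto simp: rot_def)
        thus ?thesis using rb by (metis UnI2 image_eqI)
      qed
    qed
    show "\<forall>a\<in>P. \<forall>c\<in>P. a = rot (-1) c \<longrightarrow> rot (-1) a = a"
    proof (intro ballI impI)
      fix a c assume h: "a \<in> P" "c \<in> P" "a = rot (-1) c"
      have "0 \<le> snd a" "0 \<le> snd c" using quadP h by auto
      moreover have "snd a = -1 - snd c" using h(3) by (auto simp: rot_def)
      ultimately show "rot (-1) a = a" by auto
    qed
    show "\<forall>a\<in>P. \<forall>c\<in>P. (before a (rot (-1) c) \<longrightarrow> G a < - G c) \<and> (before (rot (-1) c) a \<longrightarrow> - G c < G a)"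
    proof (intro ballI conjI impI)
      fix a c assume a: "a \<in> P" and c: "c \<in> P"
      obtain ra sa where ea: "a = (ra, sa)" by fastforce
      obtain rc sc where ec: "c = (rc, sc)" by fastforce
      have q: "ra \<le> 0" "0 \<le> sa" "rc \<le> 0" "0 \<le> sc" using quadP a c ea ec by auto
      {
        assume "before a (rot (-1) c)"
        hence False using q ea ec by (auto simp: before_def rot_def)
        thus "G a < - G c" by simp
      }
      {
        assume "before (rot (-1) c) a"
        hence bb: "ra = -1 - rc" using q ea ec by (auto simp: before_def rot_def)
        hence "(ra = 0 \<and> rc = -1) \<or> (ra = -1 \<and> rc = 0)" using q by auto
        thus "- G c < G a"
        proof
          assume s: "ra = 0 \<and> rc = -1"
          have "G a \<ge> G (0,0)" using row0[of sa] a ea s by simp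
          moreover have "G c \<ge> G (-1,0)" using rowm1[of sc] c ec s A by simp
          ultimately show ?thesis using e by simp
        next
          assume s: "ra = -1 \<and> rc = 0"
          have "G c \<ge> G (0,0)" using row0[of sc] c ec s by simp
          moreover have "G a \<ge> G (-1,0)" using rowm1[of sa] a ea s A by simp
          ultimately show ?thesis using e by simp
        qed
      }
    qed
  qed
qed

lemma Y_ok:
  assumes cs: "cons P G n" and sk: "skew_diagram P" and m: "m \<ge> 1"
    and quad: "\<forall>b\<in>P. fst b \<le> 0 \<and> m \<le> snd b"
  shows "D_tableau n (build P G 1) \<and> standard n (build P G 1)"
proof (rule cons.build_ok[OF cs sk])
  show "\<forall>a\<in>P. \<forall>c\<in>P. \<forall>b. (fst a \<le> fst b \<and> fst b \<le> fst (rot 1 c) \<and> snd a \<le> snd b \<and> snd b \<le> snd (rot 1 c))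
               \<or> (fst (rot 1 c) \<le> fst b \<and> fst b \<le> fst a \<and> snd (rot 1 c) \<le> snd b \<and> snd b \<le> snd a)
               \<longrightarrow> b \<in> P \<union> rot 1 ` P"
  proof (intro ballI allI impI)
    fix a c b assume a: "a \<in> P" and c: "c \<in> P" and h: "(fst a \<le> fst b \<and> fst b \<le> fst (rot 1 c) \<and> snd a \<le> snd b \<and> snd b \<le> snd (rot 1 c))
               \<or> (fst (rot 1 c) \<le> fst b \<and> fst b \<le> fst a \<and> snd (rot 1 c) \<le> snd b \<and> snd b \<le> snd a)"
    have "fst a \<le> 0" "m \<le> snd a" "fst c \<le> 0" "m \<le> snd c" using quad a c by auto
    hence False using h m by (auto simp: rot_def)
    thus "b \<in> P \<union> rot 1 ` P" by simp
  qed
  show "\<forall>a\<in>P. \<forall>c\<in>P. a = rot 1 c \<longrightarrow> rot 1 a = a"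
  proof (intro ballI impI)
    fix a c assume a: "a \<in> P" and c: "c \<in> P" and h: "a = rot 1 c"
    have "fst a \<le> 0" "fst c \<le> 0" using quad a c by auto
    hence False using h by (auto simp: rot_def)
    thus "rot 1 a = a" by simp
  qed
  show "\<forall>a\<in>P. \<forall>c\<in>P. (before a (rot 1 c) \<longrightarrow> G a < - G c) \<and> (before (rot 1 c) a \<longrightarrow> - G c < G a)"
  proof (intro ballI conjI impI)
    fix a c assume a: "a \<in> P" and c: "c \<in> P"
    have q: "fst a \<le> 0" "m \<le> snd a" "fst c \<le> 0" "m \<le> snd c" using quad a c by auto
    { assume "before a (rot 1 c)"
      hence False using q m by (auto simp: rot_def before_def)
      thus "G a < - G c" by simp }
    { assume "before (rot 1 c) a"
      hence False using q m by (auto simp: rot_def before_def)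
      thus "- G c < G a" by simp }
  qed
qed


context cons begin

lemma G_inj: "inj_on G P"
proof (rule inj_onI)
  fix a b assume "a \<in> P" "b \<in> P" "G a = G b"
  moreover have "inj_on (\<lambda>b. \<bar>G b\<bar>) P" using good unfolding goodG_def by blast
  ultimately show "a = b" unfolding inj_on_def by simp
qed

lemma entries_build:
  assumes b: "b \<in> P" and nb: "b \<notin> rot t ` P"
  shows "entries n (build P G t) b = {G b}"
proof -
  have "k = G b" if k: "k \<in> Nums n" "build P G t k = b" for k
  proof -
    obtain b' where b': "b' \<in> P" "k = G b' \<or> k = - G b'" using k_ex k(1) by blast
    show ?thesis
    proof (cases "k = G b'")
      case True
      have "b' = b" using build_G[OF b'(1)] k(2) unfolding True[symmetric] by metis
      thus ?thesis using True by blast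
    next
      case False
      hence "k = - G b'" using b' by blast
      hence "b = rot t b'" using build_negG[OF b'(1)] k(2) by metis
      thus ?thesis using nb b'(1) by blast
    qed
  qed
  hence "\<And>k. k \<in> entries n (build P G t) b \<Longrightarrow> k = G b" unfolding entries_def by blast
  moreover have "G b \<in> entries n (build P G t) b" using build_G[OF b] G_Nums[OF b] unfolding entries_def by blast
  ultimately show ?thesis by blast
qed

lemma neg_count_build:
  assumes S: "S \<subseteq> P" and d: "S \<inter> rot t ` P = {}"
  shows "neg_count n (build P G t) S = card {b\<in>S. G b < 0}"
proof -
  have "{k \<in> Nums n. k < 0 \<and> build P G t k \<in> S} = G ` {b\<in>S. G b < 0}"
  proof
    show "{k \<in> Nums n. k < 0 \<and> build P G t k \<in> S} \<subseteq> G ` {b\<in>S. G b < 0}"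
    proof
      fix k assume k: "k \<in> {k \<in> Nums n. k < 0 \<and> build P G t k \<in> S}"
      let ?b = "build P G t k"
      have "?b \<in> P" "?b \<notin> rot t ` P" using k S d by auto
      hence "entries n (build P G t) ?b = {G ?b}" by (rule entries_build)
      hence "k = G ?b" using k unfolding entries_def by auto
      thus "k \<in> G ` {b\<in>S. G b < 0}" using k by auto
    qed
    show "G ` {b\<in>S. G b < 0} \<subseteq> {k \<in> Nums n. k < 0 \<and> build P G t k \<in> S}"
      using S build_G G_Nums by auto
  qed
  moreover have "inj_on G {b\<in>S. G b < 0}" by (rule inj_on_subset[OF G_inj]) (use S in auto)
  ultimately show ?thesis unfolding neg_count_def by (simp add: card_image)
qed

end

lemma neg_count_insert:
  assumes "z \<notin> A" "entries n p z = {kz}"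
  shows "neg_count n p (insert z A) = neg_count n p A + (if kz < 0 then 1 else 0)"
proof -
  have "{k \<in> Nums n. k < 0 \<and> p k \<in> insert z A} = {k \<in> Nums n. k < 0 \<and> p k \<in> A} \<union> (if kz < 0 then {kz} else {})"
    using assms unfolding entries_def by auto
  moreover have "{k \<in> Nums n. k < 0 \<and> p k \<in> A} \<inter> (if kz < 0 then {kz} else {}) = {}"
    using assms unfolding entries_def by auto
  moreover have "finite {k \<in> Nums n. k < 0 \<and> p k \<in> A}" by simp
  ultimately show ?thesis unfolding neg_count_def by (simp add: card_Un_disjoint)
qed

lemma corner:
  assumes sk: "skew_diagram lam" and ne: "lam \<noteq> {}"
  shows "\<exists>r q. (r,q) \<in> lam \<and> (\<forall>b\<in>lam. fst b \<le> r \<and> q \<le> snd b)"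
proof -
  have fin: "finite lam" using sk unfolding skew_diagram_def by simp
  let ?r = "Max (fst ` lam)" and ?q = "Min (snd ` lam)"
  have "?r \<in> fst ` lam" using fin ne by (intro Max_in) auto
  then obtain b1 where b1: "b1 \<in> lam" "fst b1 = ?r" by (metis imageE)
  have "?q \<in> snd ` lam" using fin ne by (intro Min_in) auto
  then obtain b2 where b2: "b2 \<in> lam" "snd b2 = ?q" by (metis imageE)
  have le: "\<forall>b\<in>lam. fst b \<le> ?r \<and> ?q \<le> snd b" using fin by auto
  have sk2: "\<forall>b. fst b2 \<le> fst b \<and> fst b \<le> fst b1 \<and> snd b2 \<le> snd b \<and> snd b \<le> snd b1 \<longrightarrow> b \<in> lam"
    using sk b1(1) b2(1) unfolding skew_diagram_def by blast
  have "(?r, ?q) \<in> lam" using b1 b2 le by (intro sk2[rule_format]) auto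
  thus ?thesis using le by blast
qed

definition Fill :: "box set \<Rightarrow> (box \<Rightarrow> int) \<Rightarrow> box \<Rightarrow> int" where
  "Fill lam F = (\<lambda>b. if b \<in> lam then F b else 0)"

definition goodF :: "box set \<Rightarrow> nat \<Rightarrow> bool \<Rightarrow> (box \<Rightarrow> int) \<Rightarrow> bool" where
  "goodF lam n s F \<longleftrightarrow> goodG lam n F \<and> parity_ok s (card {b\<in>lam. F b < 0})"

definition tr :: "box \<Rightarrow> box set \<Rightarrow> (box \<Rightarrow> int) \<Rightarrow> box \<Rightarrow> int" where
  "tr v lam F = (\<lambda>b. F (translate (- fst v, - snd v) b))"

lemma goodG_tr:
  assumes "goodG lam n F"
  shows "goodG (translate v ` lam) n (tr v lam F)"
  using assms unfolding goodG_def tr_def inj_on_def by auto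

lemma tr_apply[simp]: "tr v lam F (translate v b) = F b"
  unfolding tr_def by simp

lemma card_tr: "finite lam \<Longrightarrow> card {b\<in>translate v ` lam. tr v lam F b < 0} = card {b\<in>lam. F b < 0}"
proof -
  assume "finite lam"
  have "{b\<in>translate v ` lam. tr v lam F b < 0} = translate v ` {b\<in>lam. F b < 0}" by auto
  moreover have "inj_on (translate v) {b\<in>lam. F b < 0}" by (auto simp: inj_on_def)
  ultimately show ?thesis by (simp add: card_image)
qed


locale setting =
  fixes lam :: "box set" and n :: nat and s :: bool and F :: "box \<Rightarrow> int" and r q :: int
  assumes sk: "skew_diagram lam" and cardl: "card lam = n" and gF: "goodF lam n s F"
    and cor: "(r,q) \<in> lam" and corle: "\<forall>b\<in>lam. fst b \<le> r \<and> q \<le> snd b"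
begin

lemma finl: "finite lam" using sk unfolding skew_diagram_def by simp
lemma nel: "lam \<noteq> {}" using cor by auto
lemma gG: "goodG lam n F" using gF unfolding goodF_def by simp
lemma par: "parity_ok s (card {b\<in>lam. F b < 0})" using gF unfolding goodF_def by simp

lemma cons_v: "cons (translate v ` lam) (tr v lam F) n"
proof
  show "goodG (translate v ` lam) n (tr v lam F)" by (rule goodG_tr[OF gG])
  show "finite (translate v ` lam)" using finl by simp
  show "card (translate v ` lam) = n" using cardl by (simp add: card_image inj_on_def)
qed

lemma skew_v: "skew_diagram (translate v ` lam)" by (rule skew_translate[OF sk])

lemma par_v: "parity_ok s (card {b\<in>translate v ` lam. tr v lam F b < 0})"
  using par card_tr[OF finl] by simp

definition v0 where "v0 = (-r, -q)"
abbreviation "P0 \<equiv> translate v0 ` lam"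
abbreviation "G0 \<equiv> tr v0 lam F"

lemma quad0: "b \<in> P0 \<Longrightarrow> fst b \<le> 0 \<and> 0 \<le> snd b"
  using corle unfolding v0_def translate_def by auto

lemma origin0: "(0,0) \<in> P0"
proof -
  have "translate v0 (r,q) = (0,0)" unfolding v0_def translate_def by simp
  thus ?thesis using cor by (metis image_eqI)
qed

lemma norm0: "norm P0 G0 n"
  using cons_v[of v0] skew_v[of v0] origin0 quad0 unfolding cons_def norm_def by blast

lemma zero0: "b \<in> P0 \<Longrightarrow> content b = 0 \<Longrightarrow> b = (0,0)"
  using quad0[of b] unfolding content_def by (auto simp: prod_eq_iff)

lemma content0: "b \<in> P0 \<Longrightarrow> content b \<ge> 0"
  using quad0[of b] unfolding content_def by auto

lemma hs: "has_shape lam (translate v ` lam)" unfolding has_shape_def by blast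

lemma fill_v:
  assumes e: "\<forall>b\<in>lam. box_entry n s p (translate v b) = F b"
  shows "fill_of lam n s p (translate v ` lam) = Fill lam F"
  using fill_of_eq[OF finl nel refl, of n s p v] e unfolding Fill_def by auto

definition vY :: "nat \<Rightarrow> box" where "vY m = (-r, int m - q)"

theorem Y_in:
  assumes m: "m \<ge> 1"
  shows "build (translate (vY m) ` lam) (tr (vY m) lam F) 1 \<in> T_m lam n m s \<and>
         pos_fill lam n s (build (translate (vY m) ` lam) (tr (vY m) lam F) 1) = Fill lam F"
proof -
  let ?v = "vY m"
  let ?P = "translate ?v ` lam" and ?G = "tr ?v lam F"
  let ?Y = "build ?P ?G 1"
  interpret cons ?P ?G n 1 by (rule cons_v)
  have quad: "\<forall>b\<in>?P. fst b \<le> 0 \<and> int m \<le> snd b" using corle unfolding vY_def translate_def by auto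
  have ok: "D_tableau n ?Y \<and> standard n ?Y"
    by (rule Y_ok[OF cons_v skew_v _ quad]) (use m in simp)
  have dg: "diagram n ?Y = ?P \<union> rot 1 ` ?P" by (rule diagram_build)
  have cP: "b \<in> ?P \<Longrightarrow> content b \<ge> int m" for b using quad unfolding content_def by force
  have cQ: "b \<in> rot 1 ` ?P \<Longrightarrow> content b < 0" for b using cP m by force
  have disj: "?P \<inter> rot 1 ` ?P = {}" using cP cQ by force
  have ex: "\<exists>b\<in>diagram n ?Y. content b = int m"
  proof -
    have "translate ?v (r,q) \<in> ?P" using cor by blast
    moreover have "content (translate ?v (r,q)) = int m" unfolding vY_def translate_def content_def by simp
    ultimately show ?thesis unfolding dg by blast
  qed
  have ge: "\<forall>b\<in>diagram n ?Y. content b \<ge> 0 \<longrightarrow> content b \<ge> int m"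
    unfolding dg using cP cQ by force
  have pb: "pos_boxes n ?Y = ?P"
    unfolding pos_boxes_def dg using cP cQ m by force
  have shp: "has_shape lam (pos_boxes n ?Y)" unfolding pb has_shape_def by blast
  have pc: "parity_ok s (neg_count n ?Y (pos_boxes n ?Y))"
    unfolding pb using neg_count_build[OF subset_refl disj] par_v by simp
  have T: "?Y \<in> T_m lam n m s" unfolding T_m_def using ok ex ge shp pc by blast
  have "\<forall>b\<in>lam. box_entry n s ?Y (translate ?v b) = F b"
  proof
    fix b assume b: "b \<in> lam"
    have "translate ?v b \<in> ?P" using b by blast
    moreover have "translate ?v b \<notin> rot 1 ` ?P" using disj b by blast
    ultimately have "entries n ?Y (translate ?v b) = {?G (translate ?v b)}" by (rule entries_build)
    thus "box_entry n s ?Y (translate ?v b) = F b" using box_entry_single by simp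
  qed
  hence "pos_fill lam n s ?Y = Fill lam F" unfolding pos_fill_def pb by (rule fill_v)
  thus ?thesis using T by blast
qed


lemma split_props:
  assumes "vsplit n D S \<or> hsplit n D S"
  shows "S \<subseteq> D \<and> card S = n \<and> card (D - S) = n \<and> (\<forall>b\<in>S. 0 \<le> content b) \<and> (\<forall>b\<in>D - S. content b \<le> 0)"
  using assms unfolding vsplit_def hsplit_def by auto

theorem Xbox_in:
  assumes C1: "(0,1) \<in> P0 \<longrightarrow> G0 (0,1) > \<bar>G0 (0,0)\<bar>"
    and C2: "(-1,0) \<in> P0 \<longrightarrow> G0 (-1,0) < - \<bar>G0 (0,0)\<bar>"
  shows "build P0 G0 0 \<in> T_box lam n \<and> nonneg_fill lam n s (build P0 G0 0) = Fill lam F"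
proof -
  let ?p = "build P0 G0 0"
  interpret cons P0 G0 n 0 by (rule cons_v)
  have ok: "D_tableau n ?p \<and> standard n ?p" by (rule box_ok[OF norm0 C1 C2])
  have dg: "diagram n ?p = P0 \<union> rot 0 ` P0" by (rule diagram_build)
  have rq: "c \<in> P0 \<Longrightarrow> content (rot 0 c) \<ge> 0 \<Longrightarrow> c = (0,0)" for c
    using content0[of c] zero0[of c] by simp
  have rq0: "rot 0 (0,0) = (0,0)" unfolding rot_def by simp
  have zb: "zero_boxes n ?p = {(0,0)}"
  proof
    show "zero_boxes n ?p \<subseteq> {(0,0)}"
    proof
      fix x assume "x \<in> zero_boxes n ?p"
      hence x: "x \<in> P0 \<union> rot 0 ` P0" "content x = 0" unfolding zero_boxes_def dg by auto
      show "x \<in> {(0,0)}"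
      proof (cases "x \<in> P0")
        case True thus ?thesis using zero0 x by simp
      next
        case False
        then obtain c where c: "c \<in> P0" "x = rot 0 c" using x by auto
        hence "c = (0,0)" using rq x by simp
        thus ?thesis using c rq0 by simp
      qed
    qed
    show "{(0,0)} \<subseteq> zero_boxes n ?p" unfolding zero_boxes_def dg using origin0 by (simp add: content_def)
  qed
  have rx: "x \<in> rot 0 ` P0 \<Longrightarrow> content x \<ge> 0 \<Longrightarrow> x = (0,0)" for x
  proof -
    assume "x \<in> rot 0 ` P0" "content x \<ge> 0"
    then obtain c where c: "c \<in> P0" "x = rot 0 c" "content (rot 0 c) \<ge> 0" by blast
    thus "x = (0,0)" using rq[OF c(1,3)] rq0 by simp
  qed
  have nb: "nonneg_boxes n ?p = P0"
  proof
    show "nonneg_boxes n ?p \<subseteq> P0"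
    proof
      fix x assume "x \<in> nonneg_boxes n ?p"
      hence x: "x \<in> P0 \<union> rot 0 ` P0" "content x \<ge> 0" unfolding nonneg_boxes_def dg by auto
      show "x \<in> P0"
      proof (cases "x \<in> P0")
        case False
        hence "x = (0,0)" using rx x by blast
        thus ?thesis using origin0 by simp
      qed
    qed
    show "P0 \<subseteq> nonneg_boxes n ?p"
    proof
      fix x assume "x \<in> P0"
      thus "x \<in> nonneg_boxes n ?p" unfolding nonneg_boxes_def dg using content0[of x] by simp
    qed
  qed
  have T: "?p \<in> T_box lam n" unfolding T_box_def using ok zb nb hs by auto
  have S: "(SOME S. nonneg_part_ok lam n s ?p S) = P0"
  proof (rule some_equality)
    show "nonneg_part_ok lam n s ?p P0" unfolding nonneg_part_ok_def zb nb using hs by simp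
    fix S assume "nonneg_part_ok lam n s ?p S"
    thus "S = P0" unfolding nonneg_part_ok_def zb nb by simp
  qed
  let ?e = "G0 (0,0)"
  have enz: "?e \<noteq> 0" using G_nz origin0 by blast
  have disj: "(P0 - {(0,0)}) \<inter> rot 0 ` P0 = {}"
  proof -
    have "x = (0,0)" if "x \<in> P0" "x \<in> rot 0 ` P0" for x
      using rx[OF that(2) content0[OF that(1)]] .
    thus ?thesis by blast
  qed
  have pb: "pos_boxes n ?p = P0 - {(0,0)}"
  proof
    show "pos_boxes n ?p \<subseteq> P0 - {(0,0)}"
    proof
      fix x assume "x \<in> pos_boxes n ?p"
      hence x: "x \<in> P0 \<union> rot 0 ` P0" "content x > 0" unfolding pos_boxes_def dg by auto
      have "x \<noteq> (0,0)" using x(2) by (auto simp: content_def)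
      moreover have "x \<in> P0"
      proof (cases "x \<in> P0")
        case False
        hence "x \<in> rot 0 ` P0" using x(1) by simp
        hence "x = (0,0)" using rx x(2) by simp
        thus ?thesis using origin0 by simp
      qed
      ultimately show "x \<in> P0 - {(0,0)}" by simp
    qed
    show "P0 - {(0,0)} \<subseteq> pos_boxes n ?p"
    proof
      fix x assume x: "x \<in> P0 - {(0,0)}"
      hence "content x > 0" using content0[of x] zero0[of x] by force
      thus "x \<in> pos_boxes n ?p" unfolding pos_boxes_def dg using x by simp
    qed
  qed
  have nc: "neg_count n ?p (pos_boxes n ?p) = card {b\<in>P0 - {(0,0)}. G0 b < 0}"
    unfolding pb by (rule neg_count_build) (use disj in auto)
  have tot: "card {b\<in>P0. G0 b < 0} = card {b\<in>P0 - {(0,0)}. G0 b < 0} + (if ?e < 0 then 1 else 0)"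
  proof -
    have fin: "finite {b\<in>P0 - {(0,0)}. G0 b < 0}" using finl by simp
    show ?thesis
    proof (cases "?e < 0")
      case True
      hence "{b\<in>P0. G0 b < 0} = insert (0,0) {b\<in>P0 - {(0,0)}. G0 b < 0}" using origin0 by auto
      thus ?thesis using True fin by simp
    next
      case False
      hence "{b\<in>P0. G0 b < 0} = {b\<in>P0 - {(0,0)}. G0 b < 0}" by auto
      thus ?thesis using False by simp
    qed
  qed
  have ent0: "entries n ?p (0,0) = {?e, - ?e}"
  proof -
    have "k = ?e \<or> k = - ?e" if k: "k \<in> Nums n" "?p k = (0,0)" for k
    proof -
      obtain b' where b': "b' \<in> P0" "k = G0 b' \<or> k = - G0 b'" using k_ex k(1) by blast
      show ?thesis
      proof (cases "k = G0 b'")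
        case True
        have "b' = (0,0)" using build_G[OF b'(1)] k(2) unfolding True[symmetric] by metis
        thus ?thesis using True by blast
      next
        case False
        hence kk: "k = - G0 b'" using b' by blast
        hence "rot 0 b' = (0,0)" using build_negG[OF b'(1)] k(2) by metis
        hence "b' = (0,0)" by (metis rot_rot rq0)
        thus ?thesis using kk by blast
      qed
    qed
    moreover have "?p ?e = (0,0)" using build_G[OF origin0] .
    moreover have "?p (- ?e) = (0,0)" using build_negG[OF origin0] rq0 by simp
    moreover have "?e \<in> Nums n" using G_Nums[OF origin0] .
    ultimately show ?thesis unfolding entries_def by auto
  qed
  have be0: "box_entry n s ?p (0,0) = ?e"
  proof -
    have c2: "card (entries n ?p (0,0)) \<noteq> 1" using ent0 enz by simp
    have mx: "Max {?e, - ?e} = \<bar>?e\<bar>" by (simp add: abs_if max_def)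
    have "parity_ok s (card {b\<in>P0. G0 b < 0})" using par_v by simp
    hence "(parity_ok s (neg_count n ?p (pos_boxes n ?p))) = (?e > 0)"
    proof (cases "?e < 0")
      case True
      thus ?thesis using \<open>parity_ok s (card {b\<in>P0. G0 b < 0})\<close> unfolding nc tot parity_ok_def by auto
    next
      case False
      thus ?thesis using enz \<open>parity_ok s (card {b\<in>P0. G0 b < 0})\<close> unfolding nc tot parity_ok_def by auto
    qed
    thus ?thesis unfolding box_entry_def Let_def using c2 mx ent0 by auto
  qed
  have "\<forall>b\<in>lam. box_entry n s ?p (translate v0 b) = F b"
  proof
    fix b assume b: "b \<in> lam"
    show "box_entry n s ?p (translate v0 b) = F b"
    proof (cases "translate v0 b = (0,0)")
      case True
      thus ?thesis using be0 tr_apply[of v0 lam F b] by simp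
    next
      case False
      have "translate v0 b \<in> P0" using b by blast
      moreover have "translate v0 b \<notin> rot 0 ` P0" using disj b False by blast
      ultimately have "entries n ?p (translate v0 b) = {G0 (translate v0 b)}" by (rule entries_build)
      thus ?thesis using box_entry_single by simp
    qed
  qed
  hence "nonneg_fill lam n s ?p = Fill lam F" unfolding nonneg_fill_def S by (rule fill_v)
  thus ?thesis using T by blast
qed

end

context cons begin
lemma entries_build_rot:
  assumes b: "b \<in> P" and nb: "rot t b \<notin> P"
  shows "entries n (build P G t) (rot t b) = {- G b}"
proof -
  have "k = - G b" if k: "k \<in> Nums n" "build P G t k = rot t b" for k
  proof -
    obtain b' where b': "b' \<in> P" "k = G b' \<or> k = - G b'" using k_ex k(1) by blast
    show ?thesis
    proof (cases "k = G b'")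
      case True
      have "b' = rot t b" using build_G[OF b'(1)] k(2) unfolding True[symmetric] by metis
      thus ?thesis using b'(1) nb by blast
    next
      case False
      hence kk: "k = - G b'" using b' by blast
      hence "rot t b' = rot t b" using build_negG[OF b'(1)] k(2) by metis
      thus ?thesis using kk by simp
    qed
  qed
  hence "\<And>k. k \<in> entries n (build P G t) (rot t b) \<Longrightarrow> k = - G b" unfolding entries_def by blast
  moreover have "- G b \<in> entries n (build P G t) (rot t b)" using build_negG[OF b] G_Nums[OF b] unfolding entries_def by simp
  ultimately show ?thesis by blast
qed
end


context norm begin

lemma zeroP: "b \<in> P \<Longrightarrow> content b = 0 \<Longrightarrow> b = (0,0)"
  using quadP[of b] unfolding content_def by (auto simp: prod_eq_iff)

lemma contentP: "b \<in> P \<Longrightarrow> content b \<ge> 0"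
  using quadP[of b] unfolding content_def by auto

lemma split_props:
  assumes "vsplit n D S \<or> hsplit n D S"
  shows "S \<subseteq> D \<and> card S = n \<and> card (D - S) = n \<and> (\<forall>b\<in>S. 0 \<le> content b) \<and> (\<forall>b\<in>D - S. content b \<le> 0)"
  using assms unfolding vsplit_def hsplit_def by auto

lemma two_zero_gen:
  assumes t: "t = 1 \<or> t = -1" and ok: "D_tableau n (build P G t) \<and> standard n (build P G t)"
    and par_v: "parity_ok s (card {b\<in>P. G b < 0})"
  shows "P \<inter> rot t ` P = {}"
    and "diagram n (build P G t) - P = rot t ` P"
    and "card (zero_boxes n (build P G t)) = 2"
    and "parity_ok s (neg_count n (build P G t) P)"
    and "\<forall>S. (vsplit n (diagram n (build P G t)) S \<or> hsplit n (diagram n (build P G t)) S) \<and>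
            parity_ok s (neg_count n (build P G t) S) \<longrightarrow> S = P"
    and "\<forall>b\<in>P. box_entry n s (build P G t) b = G b"
    and "card (rot t ` P) = n"
    and "\<forall>b\<in>rot t ` P. content b \<le> 0"
proof -
  let ?p = "build P G t"
  let ?Q = "rot t ` P"
  interpret cons P G n t by (rule cons_t)
  have dg: "diagram n ?p = P \<union> ?Q" by (rule diagram_build)
  show disj: "P \<inter> ?Q = {}"
  proof -
    have False if x: "x \<in> P" "c \<in> P" "x = rot t c" for x c
    proof -
      have "fst x \<le> 0" "0 \<le> snd x" "fst c \<le> 0" "0 \<le> snd c" using quadP x by auto
      thus False using t x(3) by (auto simp: rot_def)
    qed
    thus ?thesis by blast
  qed
  show dm: "diagram n ?p - P = ?Q" unfolding dg using disj by blast
  have cQ: "content x \<le> 0" if xq: "x \<in> ?Q" for x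
  proof -
    obtain c where c: "c \<in> P" "x = rot t c" using xq by blast
    thus ?thesis using contentP[OF c(1)] by simp
  qed
  thus "\<forall>b\<in>?Q. content b \<le> 0" by blast
  have cQ0: "x = (t,t)" if xq: "x \<in> ?Q" "content x = 0" for x
  proof -
    obtain c where c: "c \<in> P" "x = rot t c" using xq(1) by blast
    hence "content c = 0" using xq(2) by simp
    hence "c = (0,0)" by (rule zeroP[OF c(1)])
    thus ?thesis using c by (simp add: rot_def)
  qed
  have tt2: "(t,t) = rot t (0,0)" by (simp add: rot_def)
  have tt: "(t,t) \<in> ?Q" "(t,t) = rot t (0,0)" by (rule image_eqI[where f="rot t", OF tt2 origin]) (rule tt2)
  have tne: "(t,t) \<noteq> (0,0)" using t by auto
  have zb: "zero_boxes n ?p = {(0,0), (t,t)}"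
  proof
    show "zero_boxes n ?p \<subseteq> {(0,0), (t,t)}"
    proof
      fix x assume "x \<in> zero_boxes n ?p"
      hence x: "x \<in> P \<union> ?Q" "content x = 0" unfolding zero_boxes_def dg by auto
      show "x \<in> {(0,0), (t,t)}"
      proof (cases "x \<in> P")
        case True thus ?thesis using zeroP x(2) by simp
      next
        case False thus ?thesis using cQ0 x by simp
      qed
    qed
    have "content (t,t) = 0" "content (0::int,0::int) = 0" by (auto simp: content_def)
    thus "{(0,0), (t,t)} \<subseteq> zero_boxes n ?p"
      unfolding zero_boxes_def dg using origin tt by blast
  qed
  show "card (zero_boxes n ?p) = 2" unfolding zb using tne by simp
  have ncP: "neg_count n ?p P = card {b\<in>P. G b < 0}"
    by (rule neg_count_build[OF subset_refl disj])
  show parP: "parity_ok s (neg_count n ?p P)" unfolding ncP by (rule par_v)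
  have cardP: "card P = n" by (rule norm.cardP[OF norm_axioms])
  show cardQ: "card ?Q = n" using cardP by (simp add: card_image inj_on_def)
  have finP: "finite P" by (rule norm.finP[OF norm_axioms])
  have ent1: "entries n ?p (0,0) = {G (0,0)}"
    by (rule entries_build[OF origin]) (use disj origin in blast)
  have ent2: "entries n ?p (t,t) = {- G (0,0)}"
    unfolding tt(2) by (rule entries_build_rot[OF origin]) (use disj origin tt in blast)
  show "\<forall>S. (vsplit n (diagram n ?p) S \<or> hsplit n (diagram n ?p) S) \<and>
            parity_ok s (neg_count n ?p S) \<longrightarrow> S = P"
  proof (intro allI impI)
    fix S assume h: "(vsplit n (diagram n ?p) S \<or> hsplit n (diagram n ?p) S) \<and> parity_ok s (neg_count n ?p S)"
    have sp: "S \<subseteq> P \<union> ?Q" "card S = n" "\<forall>b\<in>S. 0 \<le> content b" "\<forall>b\<in>(P \<union> ?Q) - S. content b \<le> 0"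
      using split_props[of "diagram n ?p" S] h unfolding dg by auto
    have SQ: "S \<inter> ?Q \<subseteq> {(t,t)}"
    proof
      fix x assume x: "x \<in> S \<inter> ?Q"
      have "content x \<ge> 0" using sp(3) x by blast
      moreover have "content x \<le> 0" using cQ x by blast
      ultimately have "content x = 0" by simp
      thus "x \<in> {(t,t)}" using cQ0 x by blast
    qed
    have PS: "P - S \<subseteq> {(0,0)}"
    proof
      fix x assume x: "x \<in> P - S"
      hence "content x \<le> 0" using sp(4) by blast
      moreover have "content x \<ge> 0" using contentP x by blast
      ultimately have "content x = 0" by simp
      thus "x \<in> {(0,0)}" using zeroP x by blast
    qed
    have "finite (P \<union> ?Q)" using finP by simp
    hence finS: "finite S" using sp(1) by (rule finite_subset[rotated])
    show "S = P"
    proof (cases "(0,0) \<in> S")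
      case True
      hence "P \<subseteq> S" using PS by blast
      thus ?thesis using card_subset_eq[OF finS \<open>P \<subseteq> S\<close>] cardP sp(2) by simp
    next
      case False
      let ?A = "P - {(0,0)}"
      have AS: "?A \<subseteq> S" using PS by blast
      have SA: "S \<subseteq> insert (t,t) ?A" using sp(1) SQ False by blast
      have cA: "card ?A = n - 1" using cardP origin finP by simp
      have "card P > 0" using finP origin by (auto simp: card_gt_0_iff)
      hence n1: "n \<ge> 1" using cardP by simp
      have "(t,t) \<in> S"
      proof (rule ccontr)
        assume "(t,t) \<notin> S"
        hence "S \<subseteq> ?A" using SA by blast
        hence "card S \<le> card ?A" using finP by (intro card_mono) auto
        hence "card S \<le> n - 1" using cA by simp
        thus False using sp(2) n1 by simp
      qed
      hence Seq: "S = insert (t,t) ?A" using AS SA by blast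
      have tA: "(t,t) \<notin> ?A" using disj tt by blast
      have "neg_count n ?p S = neg_count n ?p ?A + (if - G (0,0) < 0 then 1 else 0)"
        unfolding Seq by (rule neg_count_insert[OF tA ent2])
      moreover have "neg_count n ?p P = neg_count n ?p ?A + (if G (0,0) < 0 then 1 else 0)"
      proof -
        have "P = insert (0,0) ?A" using origin by blast
        hence "neg_count n ?p P = neg_count n ?p (insert (0,0) ?A)" by simp
        also have "\<dots> = neg_count n ?p ?A + (if G (0,0) < 0 then 1 else 0)"
          by (rule neg_count_insert[OF _ ent1]) simp
        finally show ?thesis .
      qed
      moreover have "G (0,0) \<noteq> 0" using G_nz origin by blast
      moreover have "parity_ok s (neg_count n ?p S)" using h by blast
      ultimately have False using parP unfolding parity_ok_def by (cases "G (0,0) < 0") auto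
      thus ?thesis by blast
    qed
  qed
  show "\<forall>b\<in>P. box_entry n s ?p b = G b"
  proof
    fix b assume b: "b \<in> P"
    have "b \<notin> ?Q" using disj b by blast
    hence "entries n ?p b = {G b}" by (rule entries_build[OF b])
    thus "box_entry n s ?p b = G b" using box_entry_single by simp
  qed
qed

end


context setting begin

lemma two_zero0:
  assumes t: "t = 1 \<or> t = -1" and ok: "D_tableau n (build P0 G0 t) \<and> standard n (build P0 G0 t)"
  shows "P0 \<inter> rot t ` P0 = {}"
    and "diagram n (build P0 G0 t) - P0 = rot t ` P0"
    and "card (zero_boxes n (build P0 G0 t)) = 2"
    and "parity_ok s (neg_count n (build P0 G0 t) P0)"
    and "\<forall>S. (vsplit n (diagram n (build P0 G0 t)) S \<or> hsplit n (diagram n (build P0 G0 t)) S) \<and>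
            parity_ok s (neg_count n (build P0 G0 t) S) \<longrightarrow> S = P0"
    and "\<forall>b\<in>P0. box_entry n s (build P0 G0 t) b = G0 b"
    and "card (rot t ` P0) = n"
    and "\<forall>b\<in>rot t ` P0. content b \<le> 0"
  using norm.two_zero_gen[OF norm0 t ok par_v] by blast+

lemma nonneg_fill_two:
  assumes t: "t = 1 \<or> t = -1" and ok: "D_tableau n (build P0 G0 t) \<and> standard n (build P0 G0 t)"
    and sp: "vsplit n (diagram n (build P0 G0 t)) P0 \<or> hsplit n (diagram n (build P0 G0 t)) P0"
  shows "nonneg_fill lam n s (build P0 G0 t) = Fill lam F"
proof -
  let ?p = "build P0 G0 t"
  note Z = two_zero0[OF t ok]
  have S: "(SOME S. nonneg_part_ok lam n s ?p S) = P0"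
  proof (rule some_equality)
    show "nonneg_part_ok lam n s ?p P0" unfolding nonneg_part_ok_def using Z(3,4) sp hs by simp
    fix S assume "nonneg_part_ok lam n s ?p S"
    hence "(vsplit n (diagram n ?p) S \<or> hsplit n (diagram n ?p) S) \<and> parity_ok s (neg_count n ?p S)"
      unfolding nonneg_part_ok_def using Z(3) by simp
    thus "S = P0" using Z(5) by blast
  qed
  have "\<forall>b\<in>lam. box_entry n s ?p (translate v0 b) = F b"
  proof
    fix b assume bl: "b \<in> lam"
    hence "translate v0 b \<in> P0" by blast
    hence "box_entry n s ?p (translate v0 b) = G0 (translate v0 b)" using Z(6) by blast
    thus "box_entry n s ?p (translate v0 b) = F b" by simp
  qed
  thus ?thesis unfolding nonneg_fill_def S by (rule fill_v)
qed

theorem Xh_in: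
  assumes R: "(0,1) \<in> P0" and e: "G0 (0,1) < - G0 (0,0)"
  shows "build P0 G0 1 \<in> T_horiz lam n s \<and> nonneg_fill lam n s (build P0 G0 1) = Fill lam F"
proof -
  let ?p = "build P0 G0 1"
  interpret cons P0 G0 n 1 by (rule cons_v)
  have ok: "D_tableau n ?p \<and> standard n ?p" by (rule horiz_ok[OF norm0 R e])
  have t: "(1::int) = 1 \<or> (1::int) = -1" by simp
  note Z = two_zero0[OF t ok]
  have dg: "diagram n ?p = P0 \<union> rot 1 ` P0" by (rule diagram_build)
  have eqS: "P0 = {b \<in> diagram n ?p. fst b \<le> 0}"
  proof
    show "P0 \<subseteq> {b \<in> diagram n ?p. fst b \<le> 0}" unfolding dg using quad0 by blast
    show "{b \<in> diagram n ?p. fst b \<le> 0} \<subseteq> P0"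
    proof
      fix x assume x: "x \<in> {b \<in> diagram n ?p. fst b \<le> 0}"
      show "x \<in> P0"
      proof (rule ccontr)
        assume "x \<notin> P0"
        then obtain c where c: "c \<in> P0" "x = rot 1 c" using x unfolding dg by blast
        have "fst c \<le> 0" using quad0[OF c(1)] by simp
        thus False using x c(2) by (simp add: rot_def)
      qed
    qed
  qed
  have cP: "card P0 = n" using cardl by (simp add: card_image inj_on_def)
  have hsp: "hsplit n (diagram n ?p) P0"
    unfolding hsplit_def
    apply (rule exI[of _ 0])
    using eqS cP Z(2,7,8) content0 by simp
  have T: "?p \<in> T_horiz lam n s" unfolding T_horiz_def using ok Z(3,4) hsp hs by blast
  have "nonneg_fill lam n s ?p = Fill lam F" by (rule nonneg_fill_two[OF t ok]) (use hsp in blast)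
  thus ?thesis using T by blast
qed

theorem Xv_in:
  assumes A: "(-1,0) \<in> P0" and e: "- G0 (0,0) < G0 (-1,0)"
  shows "build P0 G0 (-1) \<in> T_vert lam n s \<and> nonneg_fill lam n s (build P0 G0 (-1)) = Fill lam F"
proof -
  let ?p = "build P0 G0 (-1)"
  interpret cons P0 G0 n "-1" by (rule cons_v)
  have ok: "D_tableau n ?p \<and> standard n ?p" by (rule vert_ok[OF norm0 A e])
  have t: "(-1::int) = 1 \<or> (-1::int) = -1" by simp
  note Z = two_zero0[OF t ok]
  have dg: "diagram n ?p = P0 \<union> rot (-1) ` P0" by (rule diagram_build)
  have eqS: "P0 = {b \<in> diagram n ?p. snd b > -1}"
  proof
    show "P0 \<subseteq> {b \<in> diagram n ?p. snd b > -1}" unfolding dg using quad0 by fastforce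
    show "{b \<in> diagram n ?p. snd b > -1} \<subseteq> P0"
    proof
      fix x assume x: "x \<in> {b \<in> diagram n ?p. snd b > -1}"
      show "x \<in> P0"
      proof (rule ccontr)
        assume "x \<notin> P0"
        then obtain c where c: "c \<in> P0" "x = rot (-1) c" using x unfolding dg by blast
        have "snd c \<ge> 0" using quad0[OF c(1)] by simp
        thus False using x c(2) by (simp add: rot_def)
      qed
    qed
  qed
  have cP: "card P0 = n" using cardl by (simp add: card_image inj_on_def)
  have vsp: "vsplit n (diagram n ?p) P0"
    unfolding vsplit_def
    apply (rule exI[of _ "-1"])
    using eqS cP Z(2,7,8) content0 by simp
  have T: "?p \<in> T_vert lam n s" unfolding T_vert_def using ok Z(3,4) vsp hs by blast
  have "nonneg_fill lam n s ?p = Fill lam F" by (rule nonneg_fill_two[OF t ok]) (use vsp in blast)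
  thus ?thesis using T by blast
qed

end


lemma neg_count_single:
  assumes fin: "finite S" and e: "\<forall>b\<in>S. entries n p b = {G b}"
  shows "neg_count n p S = card {b\<in>S. G b < 0}"
proof -
  have pG: "\<forall>b\<in>S. p (G b) = b \<and> G b \<in> Nums n" using e unfolding entries_def by blast
  have "{k \<in> Nums n. k < 0 \<and> p k \<in> S} = G ` {b\<in>S. G b < 0}"
  proof
    show "{k \<in> Nums n. k < 0 \<and> p k \<in> S} \<subseteq> G ` {b\<in>S. G b < 0}"
    proof
      fix k assume k: "k \<in> {k \<in> Nums n. k < 0 \<and> p k \<in> S}"
      hence "k \<in> entries n p (p k)" "p k \<in> S" unfolding entries_def by auto
      hence "k = G (p k)" using e by blast
      thus "k \<in> G ` {b\<in>S. G b < 0}" using k by (metis (mono_tags, lifting) image_eqI mem_Collect_eq)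
    qed
    show "G ` {b\<in>S. G b < 0} \<subseteq> {k \<in> Nums n. k < 0 \<and> p k \<in> S}"
      using pG by auto
  qed
  moreover have "inj_on G {b\<in>S. G b < 0}"
    by (rule inj_onI) (metis (no_types, lifting) mem_Collect_eq pG)
  ultimately show ?thesis unfolding neg_count_def by (simp add: card_image)
qed

lemma goodG_back:
  assumes "goodG (translate v ` lam) n G"
  shows "goodG lam n (\<lambda>b. G (translate v b))"
  using assms unfolding goodG_def inj_on_def by auto

lemma card_back:
  "card {b\<in>translate v ` lam. G b < 0} = card {b\<in>lam. G (translate v b) < 0}"
proof -
  have "{b\<in>translate v ` lam. G b < 0} = translate v ` {b\<in>lam. G (translate v b) < 0}" by auto
  moreover have "inj_on (translate v) {b\<in>lam. G (translate v b) < 0}" by (auto simp: inj_on_def)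
  ultimately show ?thesis by (simp add: card_image)
qed

lemma corner_min:
  assumes "\<forall>b\<in>lam. fst b \<le> r \<and> q \<le> snd b" "b \<in> lam"
  shows "content (r,q) \<le> content b"
  using assms unfolding content_def by force

lemma same_tab:
  assumes dt: "D_tableau n p" and dt': "D_tableau n p'" and g: "goodG lam n F" and fin: "finite lam"
    and cl: "card lam = n"
    and r: "\<forall>b\<in>lam. p (F b) = translate v b" and r': "\<forall>b\<in>lam. p' (F b) = translate v' b"
    and d: "snd v - fst v = snd v' - fst v'"
    and grp: "\<forall>k\<in>Nums n. \<forall>l\<in>Nums n. (p k = p l \<longleftrightarrow> p' k = p' l)"
  shows "same_tableau n p p'"
  unfolding same_tableau_def
proof (rule ballI, rule conjI)
  fix k assume k: "k \<in> Nums n"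
  obtain b where b: "b \<in> lam" "\<bar>F b\<bar> = \<bar>k\<bar>" using goodG_surj[OF g fin cl k] by blast
  have Fb: "F b \<in> Nums n" using g b(1) unfolding goodG_def by blast
  have c1: "content (p (F b)) = content (p' (F b))" using r r' b(1) d by simp
  show "content (p k) = content (p' k)"
  proof (cases "k = F b")
    case True thus ?thesis using c1 by simp
  next
    case False
    hence "k = - F b" using b(2) by arith
    thus ?thesis using c1 dt_content_neg[OF dt Fb] dt_content_neg[OF dt' Fb] by simp
  qed
  show "\<forall>l\<in>Nums n. (p k = p l) = (p' k = p' l)" using grp k by blast
qed

lemma inj_nozero:
  assumes "D_tableau n p" "\<forall>b\<in>diagram n p. content b \<noteq> 0"
  shows "inj_on p (Nums n)"
proof (rule inj_onI)
  fix k l assume k: "k \<in> Nums n" and l: "l \<in> Nums n" and e: "p k = p l"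
  show "k = l"
  proof (rule ccontr)
    assume "k \<noteq> l"
    hence "content (p k) = 0" using dt_pair[OF assms(1) k l e] by blast
    moreover have "p k \<in> diagram n p" using k unfolding diagram_def by blast
    ultimately show False using assms(2) by blast
  qed
qed

theorem Y_analysis:
  assumes Y: "Y \<in> T_m lam n m s" and m: "m \<ge> 1" and sk: "skew_diagram lam" and cl: "card lam = n"
    and cor: "(r,q) \<in> lam" and corle: "\<forall>b\<in>lam. fst b \<le> r \<and> q \<le> snd b"
  shows "\<exists>F v. goodF lam n s F \<and> pos_fill lam n s Y = Fill lam F \<and> (\<forall>b\<in>lam. Y (F b) = translate v b)
      \<and> snd v - fst v = int m - content (r,q) \<and> inj_on Y (Nums n)"
proof -
  have fin: "finite lam" using sk unfolding skew_diagram_def by simp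
  have ne: "lam \<noteq> {}" using cor by blast
  have dt: "D_tableau n Y" and st: "standard n Y" and ex: "\<exists>b\<in>diagram n Y. content b = int m"
    and ge: "\<forall>b\<in>diagram n Y. content b \<ge> 0 \<longrightarrow> content b \<ge> int m"
    and shp: "has_shape lam (pos_boxes n Y)" and par: "parity_ok s (neg_count n Y (pos_boxes n Y))"
    using Y unfolding T_m_def by auto
  let ?S = "pos_boxes n Y"
  obtain v where v: "?S = translate v ` lam" using shp unfolding has_shape_def by blast
  have nz: "\<forall>b\<in>diagram n Y. content b \<noteq> 0" using ge m by force
  have inj: "inj_on Y (Nums n)" by (rule inj_nozero[OF dt nz])
  let ?G = "box_entry n s Y"
  have sub: "?S \<subseteq> diagram n Y" unfolding pos_boxes_def by blast
  have cS: "\<forall>b\<in>?S. content b > 0" unfolding pos_boxes_def by blast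
  have A: "goodG ?S n ?G \<and> (\<forall>b\<in>?S. Y (?G b) = b)"
    by (rule analysis[OF dt st sub]) (use cS sub box_entry_in[OF dt] in force)+
  define F where "F = (\<lambda>b. ?G (translate v b))"
  have gF: "goodG lam n F" unfolding F_def using goodG_back[of v lam n ?G] A v by simp
  have rep: "\<forall>b\<in>lam. Y (F b) = translate v b" unfolding F_def using A v by blast
  have ent: "\<forall>b\<in>?S. entries n Y b = {?G b}"
  proof
    fix b assume b: "b \<in> ?S"
    have "?G b \<in> Nums n" using A b unfolding goodG_def by blast
    hence "entries n Y (Y (?G b)) = {?G b}" using entries_single[OF dt _ ] inj by blast
    thus "entries n Y b = {?G b}" using A b by simp
  qed
  have finS: "finite ?S" using v fin by simp
  have "neg_count n Y ?S = card {b\<in>?S. ?G b < 0}" by (rule neg_count_single[OF finS ent])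
  also have "\<dots> = card {b\<in>lam. F b < 0}" unfolding v F_def by (rule card_back)
  finally have parF: "parity_ok s (card {b\<in>lam. F b < 0})" using par by simp
  have gfF: "goodF lam n s F" unfolding goodF_def using gF parF by blast
  have fill: "pos_fill lam n s Y = Fill lam F"
    unfolding pos_fill_def fill_of_eq[OF fin ne v] Fill_def F_def by simp
  have dl: "snd v - fst v = int m - content (r,q)"
  proof -
    obtain b0 where b0: "b0 \<in> diagram n Y" "content b0 = int m" using ex by blast
    hence "b0 \<in> ?S" unfolding pos_boxes_def using m by simp
    then obtain b1 where b1: "b1 \<in> lam" "b0 = translate v b1" using v by blast
    have "content (r,q) \<le> content b1" by (rule corner_min[OF corle b1(1)])
    hence le: "content (r,q) + (snd v - fst v) \<le> int m" using b0(2) b1(2) by simp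
    have "translate v (r,q) \<in> ?S" using v cor by blast
    hence "content (translate v (r,q)) \<ge> int m" using ge sub by (meson less_imp_le cS subsetD)
    thus ?thesis using le by simp
  qed
  show ?thesis using gfF fill rep dl inj by blast
qed


lemma count_two:
  assumes dt: "D_tableau n X" and z2: "card (zero_boxes n X) = 2"
    and sub: "S \<subseteq> diagram n X" and cS: "card S = n" and cDS: "card (diagram n X - S) = n"
    and nn: "\<forall>b\<in>S. 0 \<le> content b" and np: "\<forall>b\<in>diagram n X - S. content b \<le> 0"
  shows "inj_on X (Nums n) \<and> (\<exists>z\<in>S. content z = 0 \<and> (\<forall>b\<in>S. content b = 0 \<longrightarrow> b = z))"
proof -
  let ?D = "diagram n X"
  have finD: "finite ?D" unfolding diagram_def by simp
  have finS: "finite S" using finD sub by (rule finite_subset[rotated])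
  have cD: "card ?D = 2 * n"
  proof -
    have "card (?D - S) = card ?D - card S" using finS sub by (rule card_Diff_subset)
    moreover have "card S \<le> card ?D" using finD sub by (rule card_mono)
    ultimately show ?thesis using cS cDS by simp
  qed
  have inj: "inj_on X (Nums n)"
  proof (rule eq_card_imp_inj_on)
    show "finite (Nums n)" by simp
    show "card (X ` Nums n) = card (Nums n)" using cD Nums_card unfolding diagram_def by simp
  qed
  let ?Kp = "{k\<in>Nums n. content (X k) > 0}" and ?Kn = "{k\<in>Nums n. content (X k) < 0}"
  have Kn: "?Kn = uminus ` ?Kp"
  proof
    show "?Kn \<subseteq> uminus ` ?Kp"
    proof
      fix k assume k: "k \<in> ?Kn"
      hence "- k \<in> ?Kp" using dt_content_neg[OF dt, of k] by simp
      thus "k \<in> uminus ` ?Kp" by (metis (no_types, lifting) image_eqI minus_minus)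
    qed
    show "uminus ` ?Kp \<subseteq> ?Kn" using dt_content_neg[OF dt] by auto
  qed
  have cK: "card ?Kn = card ?Kp" unfolding Kn by (rule card_image) (simp add: inj_on_def)
  let ?Dp = "{b\<in>?D. content b > 0}" and ?Dn = "{b\<in>?D. content b < 0}" and ?Z = "zero_boxes n X"
  have Dp: "?Dp = X ` ?Kp" unfolding diagram_def by auto
  have Dn: "?Dn = X ` ?Kn" unfolding diagram_def by auto
  have cDp: "card ?Dp = card ?Kp" unfolding Dp by (rule card_image) (rule inj_on_subset[OF inj], blast)
  have cDn: "card ?Dn = card ?Kp" unfolding Dn cK[symmetric] by (rule card_image) (rule inj_on_subset[OF inj], blast)
  have Dsplit: "?D = ?Dp \<union> ?Dn \<union> ?Z" unfolding zero_boxes_def by auto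
  have "card ?D = card ?Dp + card ?Dn + card ?Z"
  proof -
    have "card (?Dp \<union> ?Dn \<union> ?Z) = card (?Dp \<union> ?Dn) + card ?Z"
      by (rule card_Un_disjoint) (use finD in \<open>auto simp: zero_boxes_def\<close>)
    moreover have "card (?Dp \<union> ?Dn) = card ?Dp + card ?Dn"
      by (rule card_Un_disjoint) (use finD in auto)
    ultimately show ?thesis using Dsplit by simp
  qed
  hence cp: "card ?Dp = n - 1" "n \<ge> 1" using cD cDp cDn z2 by auto
  have finZ: "finite ?Z" unfolding zero_boxes_def using finD by simp
  have DpS: "?Dp \<subseteq> S" using np by force
  have S1: "S \<subseteq> ?Dp \<union> (?Z \<inter> S)" using nn sub unfolding zero_boxes_def by force
  have DnS: "?Dn \<subseteq> ?D - S" using nn by force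
  have S2: "?D - S \<subseteq> ?Dn \<union> (?Z - S)" using np unfolding zero_boxes_def by force
  have g1: "card (?Z \<inter> S) \<ge> 1"
  proof -
    have "card S \<le> card (?Dp \<union> (?Z \<inter> S))" using S1 finD finZ by (intro card_mono) auto
    also have "\<dots> \<le> card ?Dp + card (?Z \<inter> S)" by (rule card_Un_le)
    finally show ?thesis using cp cS by simp
  qed
  have g2: "card (?Z - S) \<ge> 1"
  proof -
    have "card (?D - S) \<le> card (?Dn \<union> (?Z - S))" using S2 finD finZ by (intro card_mono) auto
    also have "\<dots> \<le> card ?Dn + card (?Z - S)" by (rule card_Un_le)
    finally show ?thesis using cp cDS cDn cDp by simp
  qed
  have "card ?Z = card (?Z \<inter> S) + card (?Z - S)"
    using finZ by (metis Int_Diff_Un Int_Diff_disjoint card_Un_disjoint finite_Diff finite_Int)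
  hence "card (?Z \<inter> S) = 1" using g1 g2 z2 by simp
  then obtain z where z: "?Z \<inter> S = {z}" by (metis card_1_singletonE)
  have "z \<in> S" "content z = 0" using z unfolding zero_boxes_def by auto
  moreover have "\<forall>b\<in>S. content b = 0 \<longrightarrow> b = z" using z sub unfolding zero_boxes_def by blast
  ultimately show ?thesis using inj by blast
qed


lemma T_zero_cases:
  assumes "X \<in> T_zero lam n s"
  shows "D_tableau n X \<and> standard n X \<and> (\<exists>S. nonneg_part_ok lam n s X S) \<and>
         (card (zero_boxes n X) = 1 \<or> card (zero_boxes n X) = 2)"
proof -
  have "X \<in> T_box lam n \<or> X \<in> T_horiz lam n s \<or> X \<in> T_vert lam n s" using assms unfolding T_zero_def by blast
  thus ?thesis
  proof (elim disjE)
    assume "X \<in> T_box lam n"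
    hence h: "D_tableau n X" "standard n X" "card (zero_boxes n X) = 1" "has_shape lam (nonneg_boxes n X)"
      unfolding T_box_def by auto
    hence "nonneg_part_ok lam n s X (nonneg_boxes n X)" unfolding nonneg_part_ok_def by simp
    thus ?thesis using h by blast
  next
    assume "X \<in> T_horiz lam n s"
    then obtain S where h: "D_tableau n X" "standard n X" "card (zero_boxes n X) = 2"
      "hsplit n (diagram n X) S" "has_shape lam S" "parity_ok s (neg_count n X S)"
      unfolding T_horiz_def by auto
    hence "nonneg_part_ok lam n s X S" unfolding nonneg_part_ok_def by simp
    thus ?thesis using h by blast
  next
    assume "X \<in> T_vert lam n s"
    then obtain S where h: "D_tableau n X" "standard n X" "card (zero_boxes n X) = 2"
      "vsplit n (diagram n X) S" "has_shape lam S" "parity_ok s (neg_count n X S)"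
      unfolding T_vert_def by auto
    hence "nonneg_part_ok lam n s X S" unfolding nonneg_part_ok_def by simp
    thus ?thesis using h by blast
  qed
qed

lemma split_props2:
  assumes "vsplit n D S \<or> hsplit n D S"
  shows "S \<subseteq> D \<and> card S = n \<and> card (D - S) = n \<and> (\<forall>b\<in>S. 0 \<le> content b) \<and> (\<forall>b\<in>D - S. content b \<le> 0)"
  using assms unfolding vsplit_def hsplit_def by auto

theorem X_analysis:
  assumes X: "X \<in> T_zero lam n s" and sk: "skew_diagram lam" and cl: "card lam = n"
    and cor: "(r,q) \<in> lam" and corle: "\<forall>b\<in>lam. fst b \<le> r \<and> q \<le> snd b"
  shows "\<exists>F v. goodF lam n s F \<and> nonneg_fill lam n s X = Fill lam F \<and> (\<forall>b\<in>lam. X (F b) = translate v b)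
      \<and> snd v - fst v = - content (r,q) \<and> translate v ` lam \<subseteq> diagram n X
      \<and> (\<forall>b\<in>diagram n X - translate v ` lam. content b \<le> 0)
      \<and> ((card (zero_boxes n X) = 1 \<and> X (- F (r,q)) = translate v (r,q)) \<or>
         (card (zero_boxes n X) = 2 \<and> inj_on X (Nums n)))"
proof -
  have fin: "finite lam" using sk unfolding skew_diagram_def by simp
  have ne: "lam \<noteq> {}" using cor by blast
  note TZ = T_zero_cases[OF X]
  have dt: "D_tableau n X" and st: "standard n X" using TZ by auto
  define S0 where "S0 = (SOME S. nonneg_part_ok lam n s X S)"
  have ok: "nonneg_part_ok lam n s X S0" unfolding S0_def using TZ by (metis someI_ex)
  have shp: "has_shape lam S0" using ok unfolding nonneg_part_ok_def by blast
  obtain v where v: "S0 = translate v ` lam" using shp unfolding has_shape_def by blast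
  have cS0: "card S0 = n" using v cl by (simp add: card_image inj_on_def)
  let ?D = "diagram n X"
  have finD: "finite ?D" unfolding diagram_def by simp
  have common: "S0 \<subseteq> ?D \<and> (\<forall>b\<in>S0. 0 \<le> content b) \<and> (\<forall>b\<in>?D - S0. content b \<le> 0) \<and>
     (\<exists>z\<in>S0. content z = 0 \<and> (\<forall>b\<in>S0. content b = 0 \<longrightarrow> b = z)) \<and>
     ((card (zero_boxes n X) = 1 \<and> S0 = nonneg_boxes n X) \<or>
      (card (zero_boxes n X) = 2 \<and> inj_on X (Nums n) \<and> parity_ok s (neg_count n X S0)))"
  proof (cases "card (zero_boxes n X) = 1")
    case True
    hence S0n: "S0 = nonneg_boxes n X" using ok unfolding nonneg_part_ok_def by auto
    obtain z where z: "zero_boxes n X = {z}" using True by (metis card_1_singletonE)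
    have zS: "z \<in> S0" "content z = 0" using z S0n unfolding zero_boxes_def nonneg_boxes_def by auto
    have un: "\<forall>b\<in>S0. content b = 0 \<longrightarrow> b = z" using z S0n unfolding zero_boxes_def nonneg_boxes_def by auto
    have "S0 \<subseteq> ?D" "\<forall>b\<in>S0. 0 \<le> content b" "\<forall>b\<in>?D - S0. content b \<le> 0"
      unfolding S0n nonneg_boxes_def by auto
    thus ?thesis using zS un True S0n by blast
  next
    case False
    hence z2: "card (zero_boxes n X) = 2" using TZ by auto
    hence h: "(vsplit n ?D S0 \<or> hsplit n ?D S0) \<and> parity_ok s (neg_count n X S0)"
      using ok unfolding nonneg_part_ok_def by auto
    hence sp: "S0 \<subseteq> ?D" "card S0 = n" "card (?D - S0) = n" "\<forall>b\<in>S0. 0 \<le> content b" "\<forall>b\<in>?D - S0. content b \<le> 0"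
      using split_props2[of n ?D S0] by auto
    have "inj_on X (Nums n) \<and> (\<exists>z\<in>S0. content z = 0 \<and> (\<forall>b\<in>S0. content b = 0 \<longrightarrow> b = z))"
      by (rule count_two[OF dt z2 sp])
    thus ?thesis using sp h z2 by blast
  qed
  have sub: "S0 \<subseteq> ?D" and nn: "\<forall>b\<in>S0. 0 \<le> content b" and np: "\<forall>b\<in>?D - S0. content b \<le> 0"
    using common by auto
  obtain z where z: "z \<in> S0" "content z = 0" "\<forall>b\<in>S0. content b = 0 \<longrightarrow> b = z" using common by blast
  let ?G = "box_entry n s X"
  have A: "goodG S0 n ?G \<and> (\<forall>b\<in>S0. X (?G b) = b)"
  proof (rule analysis[OF dt st sub nn])
    show "\<forall>b\<in>S0. \<forall>b'\<in>S0. content b = 0 \<longrightarrow> content b' = 0 \<longrightarrow> b = b'" using z(3) by metis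
    show "\<forall>b\<in>S0. ?G b \<in> entries n X b" using sub box_entry_in[OF dt] by blast
  qed
  define F where "F = (\<lambda>b. ?G (translate v b))"
  have gF: "goodG lam n F" unfolding F_def using goodG_back[of v lam n ?G] A v by simp
  have rep: "\<forall>b\<in>lam. X (F b) = translate v b" unfolding F_def using A v by blast
  have GN: "\<forall>b\<in>S0. ?G b \<in> Nums n" using A unfolding goodG_def by blast
  have zc: "translate v (r,q) = z"
  proof -
    obtain bz where bz: "bz \<in> lam" "z = translate v bz" using z(1) v by blast
    have "content (r,q) \<le> content bz" by (rule corner_min[OF corle bz(1)])
    hence "content (translate v (r,q)) \<le> 0" using z(2) bz(2) by simp
    moreover have "translate v (r,q) \<in> S0" using v cor by blast
    ultimately show ?thesis using nn z(3) by force
  qed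
  have dl: "snd v - fst v = - content (r,q)"
  proof -
    have "content (translate v (r,q)) = 0" using zc z(2) by simp
    thus ?thesis by simp
  qed
  have finS: "finite S0" using v fin by simp
  have fill: "nonneg_fill lam n s X = Fill lam F"
    unfolding nonneg_fill_def S0_def[symmetric] fill_of_eq[OF fin ne v] Fill_def F_def by simp
  have Fc: "F (r,q) = ?G z" unfolding F_def using zc by simp
  show ?thesis
  proof (cases "card (zero_boxes n X) = 1")
    case True
    have S0n: "S0 = nonneg_boxes n X" using common True by auto
    have zb: "zero_boxes n X = {z}"
    proof -
      have "z \<in> zero_boxes n X" using z sub unfolding zero_boxes_def by blast
      thus ?thesis using True by (metis card_1_singletonE singletonD)
    qed
    have Gz: "?G z \<in> Nums n" "X (?G z) = z" using A GN z(1) by auto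
    have mz: "X (- ?G z) = z"
    proof -
      have "content (X (- ?G z)) = 0" using dt_content_neg[OF dt Gz(1)] Gz(2) z(2) by simp
      moreover have "X (- ?G z) \<in> ?D" using Gz(1) unfolding diagram_def by simp
      ultimately have "X (- ?G z) \<in> zero_boxes n X" unfolding zero_boxes_def by blast
      thus ?thesis using zb by blast
    qed
    have pb: "pos_boxes n X = S0 - {z}"
    proof
      show "pos_boxes n X \<subseteq> S0 - {z}" unfolding pos_boxes_def S0n nonneg_boxes_def using z(2) by auto
      show "S0 - {z} \<subseteq> pos_boxes n X"
      proof
        fix b assume b: "b \<in> S0 - {z}"
        hence "content b \<noteq> 0" using z(3) by blast
        hence "content b > 0" using nn b by force
        thus "b \<in> pos_boxes n X" using b sub unfolding pos_boxes_def by blast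
      qed
    qed
    have ent: "\<forall>b\<in>S0 - {z}. entries n X b = {?G b}"
    proof
      fix b assume b: "b \<in> S0 - {z}"
      hence cb: "content b \<noteq> 0" using z(3) by blast
      have "X (?G b) = b" "?G b \<in> Nums n" using A GN b by auto
      thus "entries n X b = {?G b}" using entries_single[OF dt, of "?G b"] cb by simp
    qed
    define c where "c = neg_count n X (pos_boxes n X)"
    have cc: "c = card {b\<in>S0 - {z}. ?G b < 0}" unfolding c_def pb by (rule neg_count_single) (use finS ent in auto)
    have Gnz: "?G z \<noteq> 0" using Gz(1) unfolding Nums_def by simp
    have ez: "?G z \<in> entries n X z" "- ?G z \<in> entries n X z" using Gz mz unfolding entries_def by auto
    have c2: "card (entries n X z) \<noteq> 1"
    proof
      assume "card (entries n X z) = 1"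
      then obtain x where "entries n X z = {x}" by (metis card_1_singletonE)
      thus False using ez Gnz by auto
    qed
    define M where "M = Max (entries n X z)"
    have Mge: "?G z \<le> M" "- ?G z \<le> M" unfolding M_def using ez by (auto intro: Max_ge)
    have Gzv: "?G z = (if parity_ok s c then M else - M)"
      unfolding c_def M_def box_entry_def Let_def using c2 by simp
    have tot: "card {b\<in>S0. ?G b < 0} = c + (if ?G z < 0 then 1 else 0)"
    proof -
      have fin2: "finite {b\<in>S0 - {z}. ?G b < 0}" using finS by simp
      show ?thesis
      proof (cases "?G z < 0")
        case True
        hence "{b\<in>S0. ?G b < 0} = insert z {b\<in>S0 - {z}. ?G b < 0}" using z(1) by auto
        thus ?thesis using True fin2 cc by simp
      next
        case False
        hence "{b\<in>S0. ?G b < 0} = {b\<in>S0 - {z}. ?G b < 0}" by auto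
        thus ?thesis using False cc by simp
      qed
    qed
    have parS: "parity_ok s (card {b\<in>S0. ?G b < 0})"
    proof (cases "parity_ok s c")
      case True
      hence "?G z = M" using Gzv by simp
      hence "?G z > 0" using Mge Gnz by linarith
      thus ?thesis using tot True by simp
    next
      case False
      hence "?G z = - M" using Gzv by simp
      hence "?G z < 0" using Mge Gnz by linarith
      thus ?thesis using tot False unfolding parity_ok_def by simp
    qed
    have "card {b\<in>S0. ?G b < 0} = card {b\<in>lam. F b < 0}" unfolding v F_def by (rule card_back)
    hence gfF: "goodF lam n s F" unfolding goodF_def using gF parS by simp
    have "X (- F (r,q)) = translate v (r,q)" using mz Fc zc by simp
    thus ?thesis using gfF fill rep dl sub v np True by blast
  next
    case False
    hence two: "card (zero_boxes n X) = 2" "inj_on X (Nums n)" "parity_ok s (neg_count n X S0)" using common by auto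
    have ent: "\<forall>b\<in>S0. entries n X b = {?G b}"
    proof
      fix b assume b: "b \<in> S0"
      have "X (?G b) = b" "?G b \<in> Nums n" using A GN b by auto
      thus "entries n X b = {?G b}" using entries_single[OF dt, of "?G b"] two(2) by simp
    qed
    have "neg_count n X S0 = card {b\<in>S0. ?G b < 0}" by (rule neg_count_single[OF finS ent])
    also have "\<dots> = card {b\<in>lam. F b < 0}" unfolding v F_def by (rule card_back)
    finally have "goodF lam n s F" unfolding goodF_def using gF two(3) by simp
    thus ?thesis using fill rep dl sub v np two by blast
  qed
qed


lemma type_excl:
  assumes dt: "D_tableau n X" and st: "standard n X"
    and rep: "\<forall>b\<in>lam. X (F b) = translate v b" and mz: "X (- F (r,q)) = translate v (r,q)"
    and dt': "D_tableau n X'" and st': "standard n X'" and inj': "inj_on X' (Nums n)"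
    and rep': "\<forall>b\<in>lam. X' (F b) = translate v' b"
    and sub': "translate v' ` lam \<subseteq> diagram n X'"
    and np': "\<forall>b\<in>diagram n X' - translate v' ` lam. content b \<le> 0"
    and z0: "content (translate v' (r,q)) = 0"
    and g: "goodG lam n F" and cor: "(r,q) \<in> lam"
  shows False
proof -
  let ?c = "(r,q)"
  have FN: "\<And>b. b \<in> lam \<Longrightarrow> F b \<in> Nums n" using g unfolding goodG_def by blast
  have Fc: "F ?c \<in> Nums n" "F ?c \<noteq> 0" using FN[OF cor] unfolding Nums_def by auto
  have absc: "X \<bar>F ?c\<bar> = translate v ?c" "\<bar>F ?c\<bar> \<in> Nums n"
    using rep cor mz Fc by (auto simp: abs_if)
  have mabsc: "X (- \<bar>F ?c\<bar>) = translate v ?c" "- \<bar>F ?c\<bar> \<in> Nums n"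
    using rep cor mz Fc by (auto simp: abs_if)
  have C1: "F (r, q+1) > \<bar>F ?c\<bar>" if R: "(r, q+1) \<in> lam"
  proof -
    have "before (X \<bar>F ?c\<bar>) (X (F (r,q+1)))" using absc rep R by (simp add: before_def translate_def)
    thus ?thesis using st absc FN[OF R] unfolding standard_iff by blast
  qed
  have C2: "F (r - 1, q) < - \<bar>F ?c\<bar>" if A: "(r - 1, q) \<in> lam"
  proof -
    have "before (X (F (r - 1,q))) (X (- \<bar>F ?c\<bar>))" using mabsc rep A by (simp add: before_def translate_def)
    thus ?thesis using st mabsc FN[OF A] unfolding standard_iff by blast
  qed
  let ?D = "diagram n X'"
  have skD: "skew_diagram ?D" using dt' unfolding D_tableau_def by blast
  have skD': "\<And>a c b. a \<in> ?D \<Longrightarrow> c \<in> ?D \<Longrightarrow> fst a \<le> fst b \<Longrightarrow> fst b \<le> fst c \<Longrightarrow> snd a \<le> snd b \<Longrightarrow> snd b \<le> snd c \<Longrightarrow> b \<in> ?D"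
    using skD unfolding skew_diagram_def by blast
  define z1 where "z1 = translate v' ?c"
  define z2 where "z2 = X' (- F ?c)"
  have Xz1: "X' (F ?c) = z1" unfolding z1_def using rep' cor by blast
  have z1D: "z1 \<in> ?D" using Xz1 Fc unfolding diagram_def by (metis image_eqI)
  have z2D: "z2 \<in> ?D" using Fc unfolding z2_def diagram_def by simp
  have cz1: "content z1 = 0" using z0 unfolding z1_def .
  have cz2: "content z2 = 0" unfolding z2_def using dt_content_neg[OF dt' Fc(1)] Xz1 cz1 by simp
  have neq: "z1 \<noteq> z2"
  proof
    assume "z1 = z2"
    hence "X' (F ?c) = X' (- F ?c)" using Xz1 unfolding z2_def by simp
    moreover have "- F ?c \<in> Nums n" using Fc(1) by simp
    ultimately have "F ?c = - F ?c" using inj' Fc(1) unfolding inj_on_def by blast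
    thus False using Fc by simp
  qed
  define d where "d = fst z2 - fst z1"
  have z2e: "z2 = (fst z1 + d, snd z1 + d)" using cz1 cz2 unfolding d_def content_def by (simp add: prod_eq_iff)
  have dnz: "d \<noteq> 0" using neq z2e by (metis add.right_neutral prod.collapse)
  have inS: "b \<in> translate v' ` lam" if "b \<in> ?D" "content b > 0" for b
    using np' that by force
  have entry: "\<exists>l\<in>Nums n. X' l = b" if "b \<in> ?D" for b using that unfolding diagram_def by blast
  have injX: "\<And>k l. k \<in> Nums n \<Longrightarrow> l \<in> Nums n \<Longrightarrow> X' k = X' l \<Longrightarrow> k = l" using inj' unfolding inj_on_def by blast
  show False
  proof (cases "d > 0")
    case True
    define w where "w = (fst z1, snd z1 + 1)"
    have wD: "w \<in> ?D" using skD'[OF z1D z2D, of w] True z2e unfolding w_def by simp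
    have cw: "content w = 1" using cz1 unfolding w_def content_def by simp
    then obtain b where b: "b \<in> lam" "w = translate v' b" using inS[OF wD] by auto
    have "translate v' b = translate v' (r, q+1)" using b(2) unfolding w_def z1_def translate_def by simp
    hence bR: "b = (r, q+1)" by simp
    have R: "(r, q+1) \<in> lam" using b(1) bR by simp
    have XR: "X' (F (r,q+1)) = w" using rep' R b(2) bR by simp
    define u where "u = (fst z1, snd z1 + d)"
    have uD: "u \<in> ?D" using skD'[OF z1D z2D, of u] True z2e unfolding u_def by simp
    obtain l where l: "l \<in> Nums n" "X' l = u" using entry[OF uD] by blast
    have "before (X' l) (X' (- F ?c))" using l(2) True z2e unfolding u_def z2_def[symmetric] before_def by simp
    hence l1: "l < - F ?c" using st' l(1) Fc(1) unfolding standard_iff by simp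
    have "F (r,q+1) \<le> l"
    proof (cases "d = 1")
      case True
      hence "X' l = X' (F (r,q+1))" using l(2) XR unfolding u_def w_def by simp
      thus ?thesis using injX[OF l(1) FN[OF R]] by simp
    next
      case False
      hence "before (X' (F (r,q+1))) (X' l)" using XR l(2) \<open>d > 0\<close> unfolding u_def w_def before_def by simp
      thus ?thesis using st' l(1) FN[OF R] unfolding standard_iff by force
    qed
    thus False using l1 C1[OF R] by linarith
  next
    case False
    hence dn: "d < 0" using dnz by simp
    define w where "w = (fst z1 - 1, snd z1)"
    have wD: "w \<in> ?D" using skD'[OF z2D z1D, of w] dn z2e unfolding w_def by simp
    have cw: "content w = 1" using cz1 unfolding w_def content_def by simp
    then obtain b where b: "b \<in> lam" "w = translate v' b" using inS[OF wD] by auto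
    have "translate v' b = translate v' (r - 1, q)" using b(2) unfolding w_def z1_def translate_def by simp
    hence bA: "b = (r - 1, q)" by simp
    have A: "(r - 1, q) \<in> lam" using b(1) bA by simp
    have XA: "X' (F (r - 1,q)) = w" using rep' A b(2) bA by simp
    define u where "u = (fst z1 + d, snd z1)"
    have uD: "u \<in> ?D" using skD'[OF z2D z1D, of u] dn z2e unfolding u_def by simp
    obtain l where l: "l \<in> Nums n" "X' l = u" using entry[OF uD] by blast
    have "before (X' (- F ?c)) (X' l)" using l(2) dn z2e unfolding u_def z2_def[symmetric] before_def by simp
    hence l1: "- F ?c < l" using st' l(1) Fc(1) unfolding standard_iff by simp
    have "l \<le> F (r - 1,q)"
    proof (cases "d = -1")
      case True
      hence "X' l = X' (F (r - 1,q))" using l(2) XA unfolding u_def w_def by simp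
      thus ?thesis using injX[OF l(1) FN[OF A]] by simp
    next
      case False
      hence "before (X' l) (X' (F (r - 1,q)))" using XA l(2) dn unfolding u_def w_def before_def by simp
      thus ?thesis using st' l(1) FN[OF A] unfolding standard_iff by force
    qed
    thus False using l1 C2[OF A] by linarith
  qed
qed


lemma content_agree:
  assumes dt: "D_tableau n p" and dt': "D_tableau n p'" and g: "goodG lam n F" and fin: "finite lam"
    and cl: "card lam = n"
    and r: "\<forall>b\<in>lam. p (F b) = translate v b" and r': "\<forall>b\<in>lam. p' (F b) = translate v' b"
    and d: "snd v - fst v = snd v' - fst v'"
  shows "\<forall>k\<in>Nums n. content (p k) = content (p' k)"
proof
  fix k assume k: "k \<in> Nums n"
  obtain b where b: "b \<in> lam" "\<bar>F b\<bar> = \<bar>k\<bar>" using goodG_surj[OF g fin cl k] by blast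
  have Fb: "F b \<in> Nums n" using g b(1) unfolding goodG_def by blast
  have c1: "content (p (F b)) = content (p' (F b))" using r r' b(1) d by simp
  show "content (p k) = content (p' k)"
  proof (cases "k = F b")
    case True thus ?thesis using c1 by simp
  next
    case False
    hence "k = - F b" using b(2) by arith
    thus ?thesis using c1 dt_content_neg[OF dt Fb] dt_content_neg[OF dt' Fb] by simp
  qed
qed

lemma grp1:
  assumes dt: "D_tableau n X" and z1: "card (zero_boxes n X) = 1" and k: "k \<in> Nums n" and l: "l \<in> Nums n"
  shows "(X k = X l) \<longleftrightarrow> (k = l \<or> (l = - k \<and> content (X k) = 0))"
proof
  assume "X k = X l"
  thus "k = l \<or> (l = - k \<and> content (X k) = 0)" using dt_pair[OF dt k l] by blast
next
  assume h: "k = l \<or> (l = - k \<and> content (X k) = 0)"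
  show "X k = X l"
  proof (cases "k = l")
    case False
    hence h2: "l = - k" "content (X k) = 0" using h by auto
    have "content (X l) = 0" using dt_content_neg[OF dt k] h2 by simp
    hence "X k \<in> zero_boxes n X" "X l \<in> zero_boxes n X"
      using h2 k l unfolding zero_boxes_def diagram_def by auto
    thus ?thesis using z1 by (metis card_1_singletonE singletonD)
  qed simp
qed

lemma Nums0: "Nums 0 = {}" unfolding Nums_def by auto

theorem theorem4p9:
  fixes lam :: "box set" and n m :: nat
  assumes "skew_diagram lam" and "card lam = n" and "m \<ge> 1"
  shows "\<forall>s::bool.
    (\<forall>X\<in>T_zero lam n s. \<exists>Y\<in>T_m lam n m s. pos_fill lam n s Y = nonneg_fill lam n s X) \<and>
    (\<forall>Y\<in>T_m lam n m s. \<exists>X\<in>T_zero lam n s. nonneg_fill lam n s X = pos_fill lam n s Y) \<and>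
    (\<forall>X\<in>T_zero lam n s. \<forall>X'\<in>T_zero lam n s.
        nonneg_fill lam n s X = nonneg_fill lam n s X' \<longrightarrow> same_tableau n X X') \<and>
    (\<forall>Y\<in>T_m lam n m s. \<forall>Y'\<in>T_m lam n m s.
        pos_fill lam n s Y = pos_fill lam n s Y' \<longrightarrow> same_tableau n Y Y')"
proof (intro allI)
  fix s :: bool
  note sk = assms(1) and cl = assms(2) and m = assms(3)
  have fin: "finite lam" using sk unfolding skew_diagram_def by simp
  show "(\<forall>X\<in>T_zero lam n s. \<exists>Y\<in>T_m lam n m s. pos_fill lam n s Y = nonneg_fill lam n s X) \<and>
    (\<forall>Y\<in>T_m lam n m s. \<exists>X\<in>T_zero lam n s. nonneg_fill lam n s X = pos_fill lam n s Y) \<and>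
    (\<forall>X\<in>T_zero lam n s. \<forall>X'\<in>T_zero lam n s.
        nonneg_fill lam n s X = nonneg_fill lam n s X' \<longrightarrow> same_tableau n X X') \<and>
    (\<forall>Y\<in>T_m lam n m s. \<forall>Y'\<in>T_m lam n m s.
        pos_fill lam n s Y = pos_fill lam n s Y' \<longrightarrow> same_tableau n Y Y')"
  proof (cases "lam = {}")
    case True
    hence n0: "n = 0" using cl by simp
    have e1: "T_m lam n m s = {}"
    proof -
      have False if "Y \<in> T_m lam n m s" for Y
      proof -
        have "\<exists>b\<in>diagram n Y. content b = int m" using that unfolding T_m_def by blast
        thus False unfolding diagram_def n0 Nums0 by simp
      qed
      thus ?thesis by blast
    qed
    have e2: "T_zero lam n s = {}"
    proof -
      have False if "X \<in> T_zero lam n s" for X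
      proof -
        have c: "card (zero_boxes n X) = 1 \<or> card (zero_boxes n X) = 2" using T_zero_cases[OF that] by blast
        have "zero_boxes n X = {}" unfolding zero_boxes_def diagram_def n0 Nums0 by simp
        thus False using c by simp
      qed
      thus ?thesis by blast
    qed
    show ?thesis unfolding e1 e2 by simp
  next
    case False
    obtain r q where cor: "(r,q) \<in> lam" and corle: "\<forall>b\<in>lam. fst b \<le> r \<and> q \<le> snd b"
      using corner[OF sk False] by blast
    have set_of: "setting lam n s F r q" if "goodF lam n s F" for F
      using sk cl that cor corle unfolding setting_def by blast
    have P1: "\<forall>X\<in>T_zero lam n s. \<exists>Y\<in>T_m lam n m s. pos_fill lam n s Y = nonneg_fill lam n s X"
    proof
      fix X assume X: "X \<in> T_zero lam n s"
      obtain F where F: "goodF lam n s F" "nonneg_fill lam n s X = Fill lam F"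
        using X_analysis[OF X sk cl cor corle] by blast
      interpret setting lam n s F r q by (rule set_of[OF F(1)])
      show "\<exists>Y\<in>T_m lam n m s. pos_fill lam n s Y = nonneg_fill lam n s X"
        using Y_in[OF m] F(2) by metis
    qed
    have P2: "\<forall>Y\<in>T_m lam n m s. \<exists>X\<in>T_zero lam n s. nonneg_fill lam n s X = pos_fill lam n s Y"
    proof
      fix Y assume Y: "Y \<in> T_m lam n m s"
      obtain F where F: "goodF lam n s F" "pos_fill lam n s Y = Fill lam F"
        using Y_analysis[OF Y m sk cl cor corle] by blast
      interpret setting lam n s F r q by (rule set_of[OF F(1)])
      interpret norm P0 G0 n by (rule norm0)
      have o: "(0,0) \<in> P0" by (rule origin0)
      have absinj: "\<And>a b. a \<in> P0 \<Longrightarrow> b \<in> P0 \<Longrightarrow> \<bar>G0 a\<bar> = \<bar>G0 b\<bar> \<Longrightarrow> a = b"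
        using good unfolding goodG_def inj_on_def by blast
      have "\<exists>X\<in>T_zero lam n s. nonneg_fill lam n s X = Fill lam F"
      proof (cases "((0,1) \<in> P0 \<longrightarrow> G0 (0,1) > \<bar>G0 (0,0)\<bar>) \<and> ((-1,0) \<in> P0 \<longrightarrow> G0 (-1,0) < - \<bar>G0 (0,0)\<bar>)")
        case True
        hence "build P0 G0 0 \<in> T_box lam n \<and> nonneg_fill lam n s (build P0 G0 0) = Fill lam F"
          using Xbox_in by blast
        thus ?thesis unfolding T_zero_def by blast
      next
        case False
        show ?thesis
        proof (cases "(0,1) \<in> P0 \<longrightarrow> G0 (0,1) > \<bar>G0 (0,0)\<bar>")
          case False
          hence R: "(0,1) \<in> P0" and le: "G0 (0,1) \<le> \<bar>G0 (0,0)\<bar>" by auto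
          have lt: "G0 (0,0) < G0 (0,1)" using stdP[OF o R] by (simp add: before_def)
          have ne: "\<bar>G0 (0,1)\<bar> \<noteq> \<bar>G0 (0,0)\<bar>" using absinj[OF R o] by auto
          have "G0 (0,1) < - G0 (0,0)" using le lt ne by arith
          hence "build P0 G0 1 \<in> T_horiz lam n s \<and> nonneg_fill lam n s (build P0 G0 1) = Fill lam F"
            using Xh_in[OF R] by blast
          thus ?thesis unfolding T_zero_def by blast
        next
          case True
          hence A: "(-1,0) \<in> P0" and ge: "G0 (-1,0) \<ge> - \<bar>G0 (0,0)\<bar>" using \<open>\<not> (_ \<and> _)\<close> by auto
          have lt: "G0 (-1,0) < G0 (0,0)" using stdP[OF A o] by (simp add: before_def)
          have ne: "\<bar>G0 (-1,0)\<bar> \<noteq> \<bar>G0 (0,0)\<bar>" using absinj[OF A o] by auto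
          have "- G0 (0,0) < G0 (-1,0)" using ge lt ne by arith
          hence "build P0 G0 (-1) \<in> T_vert lam n s \<and> nonneg_fill lam n s (build P0 G0 (-1)) = Fill lam F"
            using Xv_in[OF A] by blast
          thus ?thesis unfolding T_zero_def by blast
        qed
      qed
      thus "\<exists>X\<in>T_zero lam n s. nonneg_fill lam n s X = pos_fill lam n s Y" using F(2) by simp
    qed
    have P3: "\<forall>X\<in>T_zero lam n s. \<forall>X'\<in>T_zero lam n s.
        nonneg_fill lam n s X = nonneg_fill lam n s X' \<longrightarrow> same_tableau n X X'"
    proof (intro ballI impI)
      fix X X' assume X: "X \<in> T_zero lam n s" and X': "X' \<in> T_zero lam n s"
        and eq: "nonneg_fill lam n s X = nonneg_fill lam n s X'"
      obtain F v where F: "goodF lam n s F" "nonneg_fill lam n s X = Fill lam F"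
        "\<forall>b\<in>lam. X (F b) = translate v b" "snd v - fst v = - content (r,q)"
        "translate v ` lam \<subseteq> diagram n X" "\<forall>b\<in>diagram n X - translate v ` lam. content b \<le> 0"
        "(card (zero_boxes n X) = 1 \<and> X (- F (r,q)) = translate v (r,q)) \<or> (card (zero_boxes n X) = 2 \<and> inj_on X (Nums n))"
        using X_analysis[OF X sk cl cor corle] by blast
      obtain F' v' where F': "goodF lam n s F'" "nonneg_fill lam n s X' = Fill lam F'"
        "\<forall>b\<in>lam. X' (F' b) = translate v' b" "snd v' - fst v' = - content (r,q)"
        "translate v' ` lam \<subseteq> diagram n X'" "\<forall>b\<in>diagram n X' - translate v' ` lam. content b \<le> 0"
        "(card (zero_boxes n X') = 1 \<and> X' (- F' (r,q)) = translate v' (r,q)) \<or> (card (zero_boxes n X') = 2 \<and> inj_on X' (Nums n))"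
        using X_analysis[OF X' sk cl cor corle] by blast
      have FF: "\<forall>b\<in>lam. F' b = F b"
      proof
        fix b assume "b \<in> lam"
        hence "Fill lam F b = Fill lam F' b" using eq F(2) F'(2) by simp
        thus "F' b = F b" using \<open>b \<in> lam\<close> unfolding Fill_def by simp
      qed
      have rep': "\<forall>b\<in>lam. X' (F b) = translate v' b" using F'(3) FF by simp
      have mz': "card (zero_boxes n X') = 1 \<Longrightarrow> X' (- F (r,q)) = translate v' (r,q)" using F'(7) FF cor by auto
      have TZ: "D_tableau n X" "standard n X" "D_tableau n X'" "standard n X'"
        using T_zero_cases[OF X] T_zero_cases[OF X'] by auto
      have g: "goodG lam n F" using F(1) unfolding goodF_def by simp
      have cont: "\<forall>k\<in>Nums n. content (X k) = content (X' k)"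
        by (rule content_agree[OF TZ(1) TZ(3) g fin cl F(3) rep']) (use F(4) F'(4) in simp)
      have z0: "content (translate v (r,q)) = 0" "content (translate v' (r,q)) = 0" using F(4) F'(4) by simp_all
      have grp: "\<forall>k\<in>Nums n. \<forall>l\<in>Nums n. (X k = X l \<longleftrightarrow> X' k = X' l)"
      proof (cases "card (zero_boxes n X) = 1")
        case c1: True
        show ?thesis
        proof (cases "card (zero_boxes n X') = 1")
          case True
          show ?thesis using grp1[OF TZ(1) c1] grp1[OF TZ(3) True] cont by simp
        next
          case False
          hence "card (zero_boxes n X') = 2 \<and> inj_on X' (Nums n)" using F'(7) by auto
          hence False using type_excl[OF TZ(1,2) F(3) _ TZ(3,4) _ rep' F'(5) _ z0(2) g cor] F(7) c1 F'(6) FF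
            by simp
          thus ?thesis by blast
        qed
      next
        case c2: False
        hence i1: "inj_on X (Nums n)" "card (zero_boxes n X) = 2" using F(7) by auto
        show ?thesis
        proof (cases "card (zero_boxes n X') = 1")
          case True
          have rep2: "\<forall>b\<in>lam. X (F' b) = translate v b" using F(3) FF by simp
          have g': "goodG lam n F'" using F'(1) unfolding goodF_def by simp
          have False using type_excl[OF TZ(3,4) F'(3) _ TZ(1,2) i1(1) rep2 F(5) F(6) z0(1) g' cor] F'(7) True
            by simp
          thus ?thesis by blast
        next
          case False
          hence "inj_on X' (Nums n)" using F'(7) by auto
          thus ?thesis using i1(1) unfolding inj_on_def by blast
        qed
      qed
      show "same_tableau n X X'" unfolding same_tableau_def using cont grp by blast
    qed
    have P4: "\<forall>Y\<in>T_m lam n m s. \<forall>Y'\<in>T_m lam n m s.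
        pos_fill lam n s Y = pos_fill lam n s Y' \<longrightarrow> same_tableau n Y Y'"
    proof (intro ballI impI)
      fix Y Y' assume Y: "Y \<in> T_m lam n m s" and Y': "Y' \<in> T_m lam n m s"
        and eq: "pos_fill lam n s Y = pos_fill lam n s Y'"
      obtain F v where F: "goodF lam n s F" "pos_fill lam n s Y = Fill lam F"
        "\<forall>b\<in>lam. Y (F b) = translate v b" "snd v - fst v = int m - content (r,q)" "inj_on Y (Nums n)"
        using Y_analysis[OF Y m sk cl cor corle] by blast
      obtain F' v' where F': "goodF lam n s F'" "pos_fill lam n s Y' = Fill lam F'"
        "\<forall>b\<in>lam. Y' (F' b) = translate v' b" "snd v' - fst v' = int m - content (r,q)" "inj_on Y' (Nums n)"
        using Y_analysis[OF Y' m sk cl cor corle] by blast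
      have FF: "\<forall>b\<in>lam. F' b = F b"
      proof
        fix b assume "b \<in> lam"
        hence "Fill lam F b = Fill lam F' b" using eq F(2) F'(2) by simp
        thus "F' b = F b" using \<open>b \<in> lam\<close> unfolding Fill_def by simp
      qed
      have rep': "\<forall>b\<in>lam. Y' (F b) = translate v' b" using F'(3) FF by simp
      have dt: "D_tableau n Y" "D_tableau n Y'" using Y Y' unfolding T_m_def by auto
      have g: "goodG lam n F" using F(1) unfolding goodF_def by simp
      show "same_tableau n Y Y'"
      proof (rule same_tab[OF dt(1) dt(2) g fin cl F(3) rep'])
        show "snd v - fst v = snd v' - fst v'" using F(4) F'(4) by simp
        show "\<forall>k\<in>Nums n. \<forall>l\<in>Nums n. (Y k = Y l) = (Y' k = Y' l)"
          using F(5) F'(5) unfolding inj_on_def by blast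
      qed
    qed
    show ?thesis using P1 P2 P3 P4 by blast
  qed
qed


end
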